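(* Let $p$ be a prime and $G$ a finite Abelian $p$-group. For each non-cyclic subgroup $G'\le G$ choose a subgroup $L'<G'$ with $G'/L'\cong C_p\times C_p$. For each such $G'$ and each homomorphism $\rho:G'\to C_p$ (trivial or not) put $$\Theta_{G',\rho}=L'\times\rho|_{L'}-\sum_{L'<C'<G',\ [C':L']=p} C'\times\rho|_{C'}+p\,(G'\times\rho)\in B(G\times C_p).$$ Then $K(G,C_p)[\tfrac1p]=\mathbb Z[\tfrac1p]\otimes K(G,C_p)$ is a free $\mathbb Z[\tfrac1p]$-module with basis the elements $\Theta_{G',\rho}$, where $G'$ ranges over the non-cyclic subgroups of $G$ and $\rho$ over all homomorphisms $G'\to C_p$. In particular $\operatorname{rank}K(G,C_p)$ equals the number of such pairs $(G',\rho)$.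
   Context: $B(G\times C_p)$ is the Burnside ring of the Abelian group $G\times C_p$, free Abelian with basis its subgroups. For $K\le G$ and a homomorphism $\rho:K\to C_p$, $K\times\rho=\{(k,\rho(k)):k\in K\}$ is its graph. $B(G,C_p)\subset B(G\times C_p)$ is spanned by all graphs. $f:B(G\times C_p)\to R_{\mathbb Q}(G\times C_p)$ sends a subgroup $S$ to $[\mathbb Q[(G\times C_p)/S]]$, $K(G\times C_p)=\ker f$, and $K(G,C_p)=K(G\times C_p)\cap B(G,C_p)$ is the module of relative Brauer relations. *)

theory Defs
  imports "HOL-Algebra.Algebra"
begin

abbreviation Cp :: "nat \<Rightarrow> int monoid" where
  "Cp p \<equiv> integer_mod_group p"

text \<open>Homomorphisms from a subgroup K of G to C_p, as functions that vanish
  outside K (so that distinct functions are distinct homomorphisms).\<close>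
definition homs_to_Cp :: "('a, 'b) monoid_scheme \<Rightarrow> nat \<Rightarrow> 'a set \<Rightarrow> ('a \<Rightarrow> int) set" where
  "homs_to_Cp G p K = {\<rho>. \<rho> \<in> hom (subgroup_generated G K) (Cp p) \<and> (\<forall>x. x \<notin> K \<longrightarrow> \<rho> x = 0)}"

definition graph_sub :: "'a set \<Rightarrow> ('a \<Rightarrow> int) \<Rightarrow> ('a \<times> int) set" where
  "graph_sub K \<rho> = {(k, \<rho> k) | k. k \<in> K}"

text \<open>Elements of the Burnside ring B(Y) of a finite group Y: integer
  combinations of subgroups, i.e. integer functions on the set of subgroups
  (supported on subgroups).\<close>
definition burnside :: "('c, 'd) monoid_scheme \<Rightarrow> ('c set \<Rightarrow> int) set" where
  "burnside Y = {b. \<forall>S. b S \<noteq> 0 \<longrightarrow> subgroup S Y}"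

definition bsub :: "'c set \<Rightarrow> ('c set \<Rightarrow> int)" where
  "bsub S = (\<lambda>T. if T = S then 1 else 0)"

text \<open>Character of the permutation representation Q[Y/S] at x: the number
  of cosets fixed by x.\<close>
definition perm_char :: "('c, 'd) monoid_scheme \<Rightarrow> 'c set \<Rightarrow> 'c \<Rightarrow> nat" where
  "perm_char Y S x = card {C \<in> rcosets\<^bsub>Y\<^esub> S. x <#\<^bsub>Y\<^esub> C = C}"

text \<open>K(Y) = ker (B(Y) \<rightarrow> R_Q(Y)): elements whose image, a virtual rational
  representation, has zero character.\<close>
definition brauer_rel :: "('c, 'd) monoid_scheme \<Rightarrow> ('c set \<Rightarrow> int) set" where
  "brauer_rel Y = {b \<in> burnside Y.
     \<forall>x \<in> carrier Y. (\<Sum>S \<in> {S. subgroup S Y}. b S * int (perm_char Y S x)) = 0}"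

definition rel_burnside :: "('a, 'b) monoid_scheme \<Rightarrow> nat \<Rightarrow> (('a \<times> int) set \<Rightarrow> int) set" where
  "rel_burnside G p = {b \<in> burnside (G \<times>\<times> Cp p).
     \<forall>T. b T \<noteq> 0 \<longrightarrow> (\<exists>K \<rho>. subgroup K G \<and> \<rho> \<in> homs_to_Cp G p K \<and> T = graph_sub K \<rho>)}"

definition rel_brauer :: "('a, 'b) monoid_scheme \<Rightarrow> nat \<Rightarrow> (('a \<times> int) set \<Rightarrow> int) set" where
  "rel_brauer G p = brauer_rel (G \<times>\<times> Cp p) \<inter> rel_burnside G p"

definition int_lin_indep_fam :: "'i set \<Rightarrow> ('i \<Rightarrow> 'c \<Rightarrow> int) \<Rightarrow> bool" where
  "int_lin_indep_fam I v \<longleftrightarrow>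
     (\<forall>c. (\<forall>T. (\<Sum>i\<in>I. c i * v i T) = 0) \<longrightarrow> (\<forall>i\<in>I. c i = 0))"

definition zrank :: "('c \<Rightarrow> int) set \<Rightarrow> nat" where
  "zrank M = Max {card S | S. finite S \<and> S \<subseteq> M \<and> int_lin_indep_fam S (\<lambda>v. v)}"

definition p_group :: "('a, 'b) monoid_scheme \<Rightarrow> nat \<Rightarrow> bool" where
  "p_group G p \<longleftrightarrow> finite (carrier G) \<and> (\<exists>n. card (carrier G) = p ^ n)"

definition Theta :: "('a, 'b) monoid_scheme \<Rightarrow> nat \<Rightarrow> ('a set \<Rightarrow> 'a set)
     \<Rightarrow> 'a set \<Rightarrow> ('a \<Rightarrow> int) \<Rightarrow> (('a \<times> int) set \<Rightarrow> int)" where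
  "Theta G p L G' \<rho> = (\<lambda>T.
      bsub (graph_sub (L G') \<rho>) T
      - (\<Sum>C' \<in> {C'. subgroup C' G \<and> L G' \<subset> C' \<and> C' \<subset> G' \<and> card C' = p * card (L G')}.
            bsub (graph_sub C' \<rho>) T)
      + int p * bsub (graph_sub G' \<rho>) T)"

definition theta_pairs :: "('a, 'b) monoid_scheme \<Rightarrow> nat \<Rightarrow> ('a set \<times> ('a \<Rightarrow> int)) set" where
  "theta_pairs G p = {(G', \<rho>). subgroup G' G \<and> \<not> cyclic_group (subgroup_generated G G')
                                \<and> \<rho> \<in> homs_to_Cp G p G'}"

end

theory Submission
  imports Defs "HOL-Computational_Algebra.Primes" "HOL-Library.Function_Algebras"
begin

locale thm_setup = comm_group G for G :: "('a, 'b) monoid_scheme" (structure) +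
  fixes p :: nat and L :: "'a set \<Rightarrow> 'a set"
  assumes prime_p: "Factorial_Ring.prime p"
    and pgrp: "p_group G p"
    and Lax: "\<And>G'. subgroup G' G \<Longrightarrow> \<not> cyclic_group (subgroup_generated G G') \<Longrightarrow>
              subgroup (L G') G \<and> L G' \<subset> G' \<and>
              (subgroup_generated G G') Mod (L G') \<cong> (Cp p \<times>\<times> Cp p)"
begin

abbreviation "Y \<equiv> G \<times>\<times> Cp p"
abbreviation "homs K \<equiv> homs_to_Cp G p K"

lemma p_gt1: "p > 1" using prime_p prime_gt_1_nat by blast
lemma finG: "finite (carrier G)" using pgrp by (simp add: p_group_def)

lemma carrier_Cp: "carrier (Cp p) = {0..<int p}"
  using p_gt1 by (simp add: carrier_integer_mod_group)

lemma groupY: "group Y" by (simp add: DirProd_group is_group)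

lemma carrierY: "carrier Y = carrier G \<times> {0..<int p}"
  by (simp add: carrier_Cp)

lemma finY: "finite (carrier Y)" using finG by (simp add: carrier_Cp)

lemma orderY: "order Y = card (carrier G) * p"
  by (simp add: order_def carrier_Cp card_cartesian_product)

lemma commY: "x \<in> carrier Y \<Longrightarrow> y \<in> carrier Y \<Longrightarrow> x \<otimes>\<^bsub>Y\<^esub> y = y \<otimes>\<^bsub>Y\<^esub> x"
  by (auto simp: mult_DirProd' m_comm add.commute)

lemma comm_groupY: "comm_group Y"
  using groupY commY by (metis group.group_comm_groupI)

lemma homs_D:
  assumes "subgroup K G" "\<rho> \<in> homs K"
  shows "\<And>x. x \<in> K \<Longrightarrow> \<rho> x \<in> {0..<int p}"
    and "\<And>x. x \<notin> K \<Longrightarrow> \<rho> x = 0"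
    and "\<And>x y. x \<in> K \<Longrightarrow> y \<in> K \<Longrightarrow> \<rho> (x \<otimes> y) = (\<rho> x + \<rho> y) mod int p"
proof -
  have h: "\<rho> \<in> hom (subgroup_generated G K) (Cp p)" and z: "\<forall>x. x \<notin> K \<longrightarrow> \<rho> x = 0"
    using assms(2) by (auto simp: homs_to_Cp_def)
  have c: "carrier (subgroup_generated G K) = K"
    using assms(1) subgroup.carrier_subgroup_generated_subgroup by blast
  show "\<And>x. x \<in> K \<Longrightarrow> \<rho> x \<in> {0..<int p}"
    using h c carrier_Cp by (auto simp: hom_def Pi_def)
  show "\<And>x. x \<notin> K \<Longrightarrow> \<rho> x = 0" using z by blast
  show "\<And>x y. x \<in> K \<Longrightarrow> y \<in> K \<Longrightarrow> \<rho> (x \<otimes> y) = (\<rho> x + \<rho> y) mod int p"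
    using h c by (auto simp: hom_def)
qed

lemma homs_range: "subgroup K G \<Longrightarrow> \<rho> \<in> homs K \<Longrightarrow> \<rho> x \<in> {0..<int p}"
  using homs_D(1,2)[of K \<rho> x] p_gt1 by (cases "x \<in> K") auto

lemma homs_I:
  assumes "subgroup K G" "\<And>x. x \<in> K \<Longrightarrow> \<rho> x \<in> {0..<int p}" "\<And>x. x \<notin> K \<Longrightarrow> \<rho> x = 0"
    "\<And>x y. x \<in> K \<Longrightarrow> y \<in> K \<Longrightarrow> \<rho> (x \<otimes> y) = (\<rho> x + \<rho> y) mod int p"
  shows "\<rho> \<in> homs K"
proof -
  have c: "carrier (subgroup_generated G K) = K"
    using assms(1) subgroup.carrier_subgroup_generated_subgroup by blast
  show ?thesis using assms c carrier_Cp by (auto simp: homs_to_Cp_def hom_def Pi_def)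
qed

lemma restrict_homs:
  assumes "subgroup K G" "subgroup K' G" "K \<subseteq> K'" "\<rho> \<in> homs K'"
  shows "(\<lambda>x. if x \<in> K then \<rho> x else 0) \<in> homs K"
    and "graph_sub K (\<lambda>x. if x \<in> K then \<rho> x else 0) = graph_sub K \<rho>"
proof -
  show "(\<lambda>x. if x \<in> K then \<rho> x else 0) \<in> homs K"
  proof (rule homs_I[OF assms(1)])
    fix x y assume "x \<in> K" "y \<in> K"
    then show "(if x \<otimes> y \<in> K then \<rho> (x \<otimes> y) else 0) =
      ((if x \<in> K then \<rho> x else 0) + (if y \<in> K then \<rho> y else 0)) mod int p"
      using homs_D(3)[OF assms(2,4), of x y] assms(3) subgroup.m_closed[OF assms(1)] by auto
  qed (use homs_D[OF assms(2,4)] assms(3) in auto)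
  show "graph_sub K (\<lambda>x. if x \<in> K then \<rho> x else 0) = graph_sub K \<rho>"
    by (auto simp: graph_sub_def)
qed

lemma mem_graph: "(g, t) \<in> graph_sub K \<rho> \<longleftrightarrow> g \<in> K \<and> t = \<rho> g"
  by (auto simp: graph_sub_def)

lemma graph_inj:
  assumes "\<forall>x. x \<notin> K \<longrightarrow> \<rho> x = 0" "\<forall>x. x \<notin> K' \<longrightarrow> \<sigma> x = 0"
    "graph_sub K \<rho> = graph_sub K' \<sigma>"
  shows "K = K' \<and> \<rho> = \<sigma>"
proof -
  have "fst ` graph_sub K \<rho> = K" "fst ` graph_sub K' \<sigma> = K'"
    by (force simp: graph_sub_def image_iff)+
  then have KK: "K = K'" using assms(3) by simp
  have "\<rho> x = \<sigma> x" for x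
  proof (cases "x \<in> K")
    case True
    then have "(x, \<rho> x) \<in> graph_sub K' \<sigma>" using assms(3) by (auto simp: graph_sub_def)
    then show ?thesis by (auto simp: graph_sub_def)
  next
    case False then show ?thesis using assms KK by auto
  qed
  then show ?thesis using KK by auto
qed

lemma homs_zero: "\<rho> \<in> homs K \<Longrightarrow> \<forall>x. x \<notin> K \<longrightarrow> \<rho> x = 0"
  by (simp add: homs_to_Cp_def)

lemma graph_inj':
  "\<rho> \<in> homs K \<Longrightarrow> \<sigma> \<in> homs K' \<Longrightarrow> graph_sub K \<rho> = graph_sub K' \<sigma> \<Longrightarrow> K = K' \<and> \<rho> = \<sigma>"
  by (rule graph_inj[OF homs_zero homs_zero])

lemma card_graph: "card (graph_sub K \<rho>) = card K"
proof -
  have "graph_sub K \<rho> = (\<lambda>k. (k, \<rho> k)) ` K" by (auto simp: graph_sub_def)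
  moreover have "inj_on (\<lambda>k. (k, \<rho> k)) K" by (auto simp: inj_on_def)
  ultimately show ?thesis by (simp add: card_image)
qed

lemma homs_one: "subgroup K G \<Longrightarrow> \<rho> \<in> homs K \<Longrightarrow> \<rho> \<one> = 0"
proof -
  assume assms: "subgroup K G" "\<rho> \<in> homs K"
  note D = homs_D[OF assms]
  have e: "\<rho> \<one> = (\<rho> \<one> + \<rho> \<one>) mod int p"
    using D(3)[of \<one> \<one>] subgroup.one_closed[OF assms(1)] by simp
  have r: "\<rho> \<one> \<in> {0..<int p}" using D(1) subgroup.one_closed[OF assms(1)] by blast
  then have "\<rho> \<one> mod int p = \<rho> \<one>" by simp
  with e have "(\<rho> \<one> + \<rho> \<one>) mod int p = \<rho> \<one> mod int p" by simp
  then have "int p dvd (\<rho> \<one> + \<rho> \<one>) - \<rho> \<one>" by (simp only: mod_eq_dvd_iff)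
  then have "int p dvd \<rho> \<one>" by simp
  with r show "\<rho> \<one> = 0" using zdvd_not_zless[of "\<rho> \<one>" "int p"] by force
qed

lemma homs_inv:
  assumes "subgroup K G" "\<rho> \<in> homs K" "x \<in> K"
  shows "\<rho> (inv x) = (- \<rho> x) mod int p"
proof -
  note D = homs_D[OF assms(1,2)]
  have xc: "x \<in> carrier G" using subgroup.mem_carrier[OF assms(1,3)] .
  have iK: "inv x \<in> K" using subgroup.m_inv_closed[OF assms(1,3)] by simp
  have "\<rho> (x \<otimes> inv x) = (\<rho> x + \<rho> (inv x)) mod int p" using D(3)[OF assms(3) iK] .
  moreover have "\<rho> (x \<otimes> inv x) = 0" using homs_one[OF assms(1,2)] xc by simp
  ultimately have s0: "(\<rho> x + \<rho> (inv x)) mod int p = 0" by simp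
  have "\<rho> (inv x) = \<rho> (inv x) mod int p" using D(1)[OF iK] by simp
  also have "\<dots> = ((\<rho> x + \<rho> (inv x)) - \<rho> x) mod int p" by simp
  also have "\<dots> = ((\<rho> x + \<rho> (inv x)) mod int p - \<rho> x) mod int p" by (simp only: mod_diff_left_eq)
  also have "\<dots> = (- \<rho> x) mod int p" using s0 by simp
  finally show ?thesis .
qed

lemma graph_subgroup:
  assumes "subgroup K G" "\<rho> \<in> homs K"
  shows "subgroup (graph_sub K \<rho>) Y"
proof (rule group.subgroupI[OF groupY])
  note D = homs_D[OF assms]
  show "graph_sub K \<rho> \<subseteq> carrier Y"
    using D(1) subgroup.subset[OF assms(1)] by (auto simp: graph_sub_def carrier_Cp)
  show "graph_sub K \<rho> \<noteq> {}"
    using subgroup.one_closed[OF assms(1)] by (auto simp: graph_sub_def)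
next
  fix a assume a: "a \<in> graph_sub K \<rho>"
  then obtain x where xy: "a = (x, \<rho> x)" "x \<in> K"
    by (auto simp: graph_sub_def)
  have xc: "x \<in> carrier G" using subgroup.mem_carrier[OF assms(1) xy(2)] .
  have rx: "\<rho> x \<in> carrier (Cp p)" using homs_D(1)[OF assms] xy carrier_Cp by auto
  have iK: "inv x \<in> K" using subgroup.m_inv_closed[OF assms(1) xy(2)] by simp
  have "inv\<^bsub>Y\<^esub> a = (inv x, \<rho> (inv x))"
    using xy xc rx homs_inv[OF assms xy(2)] by (simp add: inv_DirProd)
  then show "inv\<^bsub>Y\<^esub> a \<in> graph_sub K \<rho>" using iK by (auto simp: graph_sub_def)
next
  fix a b assume a: "a \<in> graph_sub K \<rho>" and b: "b \<in> graph_sub K \<rho>"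
  then obtain x y where xy: "a = (x, \<rho> x)" "b = (y, \<rho> y)" "x \<in> K" "y \<in> K"
    by (auto simp: graph_sub_def)
  have "a \<otimes>\<^bsub>Y\<^esub> b = (x \<otimes> y, \<rho> (x \<otimes> y))" using xy homs_D(3)[OF assms] by simp
  then show "a \<otimes>\<^bsub>Y\<^esub> b \<in> graph_sub K \<rho>"
    using subgroup.m_closed[OF assms(1) xy(3,4)] by (auto simp: graph_sub_def)
qed


lemma perm_char_eq:
  assumes S: "subgroup S Y" and x: "x \<in> carrier Y"
  shows "perm_char Y S x = (if x \<in> S then card (rcosets\<^bsub>Y\<^esub> S) else 0)"
proof -
  interpret Yg: comm_group Y by (rule comm_groupY)
  have Ssub: "S \<subseteq> carrier Y" using S subgroup.subset by blast
  have key: "x <#\<^bsub>Y\<^esub> (S #>\<^bsub>Y\<^esub> a) = S #>\<^bsub>Y\<^esub> (x \<otimes>\<^bsub>Y\<^esub> a)" if a: "a \<in> carrier Y" for a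
  proof -
    have "x <#\<^bsub>Y\<^esub> (S #>\<^bsub>Y\<^esub> a) = (x <#\<^bsub>Y\<^esub> S) #>\<^bsub>Y\<^esub> a"
      using Yg.coset_assoc[OF x a Ssub] .
    also have "x <#\<^bsub>Y\<^esub> S = S #>\<^bsub>Y\<^esub> x"
      unfolding l_coset_def r_coset_def using Ssub x Yg.m_comm by blast
    also have "(S #>\<^bsub>Y\<^esub> x) #>\<^bsub>Y\<^esub> a = S #>\<^bsub>Y\<^esub> (x \<otimes>\<^bsub>Y\<^esub> a)"
      using Yg.coset_mult_assoc[OF Ssub x a] .
    finally show ?thesis .
  qed
  show ?thesis
  proof (cases "x \<in> S")
    case True
    have "\<forall>C \<in> rcosets\<^bsub>Y\<^esub> S. x <#\<^bsub>Y\<^esub> C = C"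
    proof
      fix C assume "C \<in> rcosets\<^bsub>Y\<^esub> S"
      then obtain a where a: "a \<in> carrier Y" "C = S #>\<^bsub>Y\<^esub> a" by (auto simp: RCOSETS_def)
      have "S #>\<^bsub>Y\<^esub> x = S" using subgroup.rcos_const[OF S Yg.is_group True] .
      then have "S #>\<^bsub>Y\<^esub> (x \<otimes>\<^bsub>Y\<^esub> a) = S #>\<^bsub>Y\<^esub> a"
        using Yg.coset_mult_assoc[OF Ssub x a(1)] by simp
      then show "x <#\<^bsub>Y\<^esub> C = C"
        using key[OF a(1)] a by simp
    qed
    then have "{C \<in> rcosets\<^bsub>Y\<^esub> S. x <#\<^bsub>Y\<^esub> C = C} = rcosets\<^bsub>Y\<^esub> S" by blast
    then show ?thesis using True by (simp add: perm_char_def)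
  next
    case False
    have "\<forall>C \<in> rcosets\<^bsub>Y\<^esub> S. x <#\<^bsub>Y\<^esub> C \<noteq> C"
    proof (intro ballI notI)
      fix C assume C0: "C \<in> rcosets\<^bsub>Y\<^esub> S" and C: "x <#\<^bsub>Y\<^esub> C = C"
      then obtain a where a: "a \<in> carrier Y" "C = S #>\<^bsub>Y\<^esub> a" by (auto simp: RCOSETS_def)
      have xa: "x \<otimes>\<^bsub>Y\<^esub> a \<in> carrier Y" using Yg.m_closed[OF x a(1)] .
      have "S #>\<^bsub>Y\<^esub> (x \<otimes>\<^bsub>Y\<^esub> a) = S #>\<^bsub>Y\<^esub> a" using C key[OF a(1)] a(2) by simp
      moreover have "x \<otimes>\<^bsub>Y\<^esub> a \<in> S #>\<^bsub>Y\<^esub> (x \<otimes>\<^bsub>Y\<^esub> a)" using Yg.rcos_self[OF xa S] .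
      ultimately have "x \<otimes>\<^bsub>Y\<^esub> a \<in> S #>\<^bsub>Y\<^esub> a" by simp
      then have "(x \<otimes>\<^bsub>Y\<^esub> a) \<otimes>\<^bsub>Y\<^esub> inv\<^bsub>Y\<^esub> a \<in> S"
        using subgroup.rcos_module_imp[OF S Yg.is_group a(1)] by blast
      then have "x \<in> S" using Yg.m_assoc[OF x a(1) Yg.inv_closed[OF a(1)]] Yg.r_inv[OF a(1)] Yg.r_one[OF x] by (simp del: carrier_DirProd)
      then show False using False by simp
    qed
    then have "{C \<in> rcosets\<^bsub>Y\<^esub> S. x <#\<^bsub>Y\<^esub> C = C} = {}" by blast
    then have "perm_char Y S x = 0" unfolding perm_char_def by (simp only: card.empty)
    then show ?thesis using False by simp
  qed
qed

lemma index_graph: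
  assumes "subgroup K G" "\<rho> \<in> homs K"
  shows "card (rcosets\<^bsub>Y\<^esub> (graph_sub K \<rho>)) * card K = card (carrier G) * p"
  using group.lagrange[OF groupY graph_subgroup[OF assms]] by (simp add: card_graph orderY)

lemma perm_char_graph:
  assumes "subgroup K G" "\<rho> \<in> homs K" and x: "(g, t) \<in> carrier Y"
  shows "perm_char Y (graph_sub K \<rho>) (g, t) =
           (if g \<in> K \<and> t = \<rho> g then card (rcosets\<^bsub>Y\<^esub> (graph_sub K \<rho>)) else 0)"
  using perm_char_eq[OF graph_subgroup[OF assms(1,2)] x] by (simp add: mem_graph)

lemma fin_subgroups: "finite {S. subgroup S Y}"
proof -
  have "{S. subgroup S Y} \<subseteq> Pow (carrier Y)" using subgroup.subset by blast
  then show ?thesis using finY finite_subset by (metis finite_Pow_iff)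
qed

lemma sum_bsub:
  assumes "subgroup T0 Y"
  shows "(\<Sum>S \<in> {S. subgroup S Y}. bsub T0 S * f S) = f T0"
proof -
  have "(\<Sum>S \<in> {S. subgroup S Y}. bsub T0 S * f S) = (\<Sum>S \<in> {S. subgroup S Y}. if T0 = S then f S else 0)"
    by (rule sum.cong) (auto simp: bsub_def)
  also have "\<dots> = f T0" using fin_subgroups assms by (simp add: sum.delta)
  finally show ?thesis .
qed

lemma DirProd_pow: "(a, b) [^]\<^bsub>A \<times>\<times> B\<^esub> (n::nat) = (a [^]\<^bsub>A\<^esub> n, b [^]\<^bsub>B\<^esub> n)"
  by (induction n) auto

lemma card_dvd_subgroup:
  assumes "subgroup A G" "subgroup B G" "A \<subseteq> B"
  shows "card A dvd card B"
proof -
  interpret H: group "subgroup_generated G B" by simp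
  have cB: "carrier (subgroup_generated G B) = B"
    using assms(2) subgroup.carrier_subgroup_generated_subgroup by blast
  have "subgroup A (subgroup_generated G B)" using subgroup_of_subgroup_generated[OF assms(3,1)] .
  from H.lagrange[OF this] show ?thesis using cB by (metis dvd_triv_right order_def)
qed

lemma subgroup_finite: "subgroup A G \<Longrightarrow> finite A"
  using finG subgroup.subset finite_subset by blast

lemma subgroup_card_pos: "subgroup A G \<Longrightarrow> card A > 0"
  using subgroup_finite subgroup.one_closed card_gt_0_iff by blast

end

locale thm_pair = thm_setup +
  fixes G' :: "'a set"
  assumes G'sub: "subgroup G' G" and G'nc: "\<not> cyclic_group (subgroup_generated G G')"
begin

abbreviation "L' \<equiv> L G'"
abbreviation "H \<equiv> subgroup_generated G G'"

lemma L'sub: "subgroup L' G" and L'ps: "L' \<subset> G'" and L'iso: "H Mod L' \<cong> (Cp p \<times>\<times> Cp p)"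
  using Lax[OF G'sub G'nc] by auto

lemma carrierH: "carrier H = G'"
  using G'sub subgroup.carrier_subgroup_generated_subgroup by blast

interpretation Hg: comm_group H by (rule abelian_subgroup_generated) (rule comm_group_axioms)

lemma L'subH: "subgroup L' H"
  using subgroup_of_subgroup_generated[of L' G'] L'sub L'ps by blast

lemma L'normal: "L' \<lhd> H" using Hg.subgroup_imp_normal[OF L'subH] .

lemma card_G': "card G' = p * p * card L'"
proof -
  have "card (carrier (H Mod L')) = card (carrier (Cp p \<times>\<times> Cp p))"
    using iso_same_card[OF L'iso] .
  then have "card (rcosets\<^bsub>H\<^esub> L') = p * p" by (simp add: FactGroup_def carrier_Cp card_cartesian_product)
  moreover have "card (rcosets\<^bsub>H\<^esub> L') * card L' = order H" using Hg.lagrange[OF L'subH] .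
  ultimately show ?thesis by (simp add: order_def carrierH)
qed

lemma pow_p_in_L':
  assumes g: "g \<in> G'"
  shows "g [^] p \<in> L'"
proof -
  interpret N: normal L' H by (rule L'normal)
  interpret M: group "H Mod L'" by (rule N.factorgroup_is_group)
  obtain h where h: "h \<in> iso (H Mod L') (Cp p \<times>\<times> Cp p)" using L'iso by (auto simp: is_iso_def)
  have gH: "g \<in> carrier H" using g carrierH by simp
  have L'cH: "L' \<subseteq> carrier H" using L'subH subgroup.subset by blast
  define c where "c = L' #>\<^bsub>H\<^esub> g"
  have cM: "c \<in> carrier (H Mod L')" using gH by (auto simp: c_def FactGroup_def RCOSETS_def)
  have powc: "c [^]\<^bsub>H Mod L'\<^esub> (n::nat) = L' #>\<^bsub>H\<^esub> (g [^]\<^bsub>H\<^esub> n)" for n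
  proof (induction n)
    case 0 then show ?case using Hg.coset_mult_one[OF L'cH] by simp
  next
    case (Suc n)
    have "c [^]\<^bsub>H Mod L'\<^esub> Suc n = (L' #>\<^bsub>H\<^esub> (g [^]\<^bsub>H\<^esub> n)) <#>\<^bsub>H\<^esub> (L' #>\<^bsub>H\<^esub> g)"
      using Suc by (simp add: c_def)
    also have "\<dots> = L' #>\<^bsub>H\<^esub> (g [^]\<^bsub>H\<^esub> n \<otimes>\<^bsub>H\<^esub> g)"
      using N.rcos_sum gH by simp
    finally show ?case by simp
  qed
  have hom: "h \<in> hom (H Mod L') (Cp p \<times>\<times> Cp p)" and bij: "bij_betw h (carrier (H Mod L')) (carrier (Cp p \<times>\<times> Cp p))"
    using h by (auto simp: iso_def)
  have grpC: "group (Cp p \<times>\<times> Cp p)" by (simp add: DirProd_group)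
  have "h (c [^]\<^bsub>H Mod L'\<^esub> p) = h c [^]\<^bsub>Cp p \<times>\<times> Cp p\<^esub> p"
    using hom_nat_pow[OF hom cM M.is_group grpC] .
  also have "\<dots> = \<one>\<^bsub>Cp p \<times>\<times> Cp p\<^esub>"
  proof -
    obtain a b where ab: "h c = (a, b)" by fastforce
    show ?thesis using ab by (simp add: DirProd_pow)
  qed
  also have "\<dots> = h \<one>\<^bsub>H Mod L'\<^esub>"
    using hom_one[OF hom M.is_group grpC] by simp
  finally have "h (c [^]\<^bsub>H Mod L'\<^esub> p) = h \<one>\<^bsub>H Mod L'\<^esub>" .
  then have "c [^]\<^bsub>H Mod L'\<^esub> p = \<one>\<^bsub>H Mod L'\<^esub>"
    using bij cM by (meson M.nat_pow_closed M.one_closed bij_betw_def inj_onD)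
  then have eq: "L' #>\<^bsub>H\<^esub> (g [^]\<^bsub>H\<^esub> p) = L'" using powc by simp
  have gpH: "g [^]\<^bsub>H\<^esub> p \<in> carrier H" using gH by simp
  have "g [^]\<^bsub>H\<^esub> p \<in> L'" using Hg.rcos_self[OF gpH L'subH] eq by simp
  then show ?thesis by (simp add: pow_subgroup_generated)
qed


abbreviation "Cs \<equiv> {C'. subgroup C' G \<and> L' \<subset> C' \<and> C' \<subset> G' \<and> card C' = p * card L'}"

definition Dg :: "'a \<Rightarrow> 'a set" where
  "Dg g = {h \<in> carrier G. \<exists>i::int. h \<otimes> g [^] i \<in> L'}"

lemma L'sub_G': "L' \<subseteq> G'" using L'ps by blast

lemma G'carr: "G' \<subseteq> carrier G" using G'sub subgroup.subset by blast

lemma L'carr: "L' \<subseteq> carrier G" using L'sub subgroup.subset by blast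

lemma Dg_subgroup:
  assumes gc: "g \<in> carrier G"
  shows "subgroup (Dg g) G"
proof (rule subgroupI)
  show "Dg g \<subseteq> carrier G" by (auto simp: Dg_def)
  have "\<one> \<otimes> g [^] (0::int) \<in> L'" using subgroup.one_closed[OF L'sub] by simp
  then have "\<one> \<in> Dg g" unfolding Dg_def using one_closed by blast
  then show "Dg g \<noteq> {}" by blast
next
  fix h assume "h \<in> Dg g"
  then obtain i :: int where h: "h \<in> carrier G" "h \<otimes> g [^] i \<in> L'" by (auto simp: Dg_def)
  have gi: "g [^] i \<in> carrier G" using gc by simp
  have "inv h \<otimes> g [^] (-i) = inv (h \<otimes> g [^] i)"
    using inv_mult[OF h(1) gi] int_pow_neg[OF gc, of i] by simp
  also have "\<dots> \<in> L'" using subgroup.m_inv_closed[OF L'sub h(2)] .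
  finally show "inv h \<in> Dg g" using h(1) by (auto simp: Dg_def)
next
  fix h1 h2 assume "h1 \<in> Dg g" "h2 \<in> Dg g"
  then obtain i1 i2 :: int where h: "h1 \<in> carrier G" "h1 \<otimes> g [^] i1 \<in> L'"
     "h2 \<in> carrier G" "h2 \<otimes> g [^] i2 \<in> L'" by (auto simp: Dg_def)
  have gi: "g [^] i1 \<in> carrier G" "g [^] i2 \<in> carrier G" using gc by simp_all
  have "(h1 \<otimes> h2) \<otimes> g [^] (i1 + i2) = (h1 \<otimes> g [^] i1) \<otimes> (h2 \<otimes> g [^] i2)"
    using int_pow_mult[OF gc, of i1 i2] h(1,3) gi by (simp add: m_ac)
  also have "\<dots> \<in> L'" using subgroup.m_closed[OF L'sub h(2,4)] .
  finally show "h1 \<otimes> h2 \<in> Dg g" using h(1,3) by (auto simp: Dg_def)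
qed

lemma L'_sub_Dg: "L' \<subseteq> Dg g"
proof
  fix l assume l: "l \<in> L'"
  then have "l \<in> carrier G" using L'carr by blast
  then have "l \<otimes> g [^] (0::int) = l" by simp
  then show "l \<in> Dg g" using l \<open>l \<in> carrier G\<close> unfolding Dg_def by (metis (mono_tags, lifting) mem_Collect_eq)
qed

lemma g_in_Dg: assumes gc: "g \<in> carrier G" shows "g \<in> Dg g"
proof -
  have "g \<otimes> g [^] (-1::int) = \<one>" using int_pow_neg[OF gc, of 1] gc by simp
  then have "g \<otimes> g [^] (-1::int) \<in> L'" using subgroup.one_closed[OF L'sub] by simp
  then show ?thesis using gc unfolding Dg_def by blast
qed

lemma Dg_sub_G': assumes g: "g \<in> G'" shows "Dg g \<subseteq> G'"
proof
  fix h assume "h \<in> Dg g"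
  then obtain i :: int where h: "h \<in> carrier G" "h \<otimes> g [^] i \<in> L'" by (auto simp: Dg_def)
  have gc: "g \<in> carrier G" using g G'carr by blast
  have gi: "g [^] i \<in> G'" using subgroup_int_pow_closed[OF G'sub g] .
  have gic: "g [^] i \<in> carrier G" using gc by simp
  have "h = (h \<otimes> g [^] i) \<otimes> inv (g [^] i)" using h(1) gic by (simp add: m_assoc)
  also have "\<dots> \<in> G'" using subgroup.m_closed[OF G'sub] subgroup.m_inv_closed[OF G'sub gi] h(2) L'sub_G' by blast
  finally show "h \<in> G'" .
qed

lemma Dg_sub_cosets:
  assumes g: "g \<in> G'"
  shows "Dg g \<subseteq> (\<Union>j\<in>{0..<p}. L' #> (g [^] j))"
proof
  fix h assume "h \<in> Dg g"
  then obtain i :: int where h: "h \<in> carrier G" "h \<otimes> g [^] i \<in> L'" by (auto simp: Dg_def)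
  have gc: "g \<in> carrier G" using g G'carr by blast
  define q where "q = (-i) div int p"
  define j where "j = (-i) mod int p"
  have j0: "0 \<le> j" "j < int p" using p_gt1 by (simp_all add: j_def)
  have ij: "-i = int p * q + j" by (simp add: q_def j_def)
  have gp: "g [^] p \<in> L'" using pow_p_in_L'[OF g] .
  have gpq: "(g [^] p) [^] q \<in> L'" using subgroup_int_pow_closed[OF L'sub gp] .
  have "g [^] (-i) = g [^] (int p * q) \<otimes> g [^] j" using ij int_pow_mult[OF gc] by simp
  also have "g [^] (int p * q) = (g [^] p) [^] q"
    using int_pow_pow[OF gc, of "int p" q] by (simp add: int_pow_int)
  also have "g [^] j = g [^] (nat j)" using j0 by (metis int_pow_int nat_0_le)
  finally have gmi: "g [^] (-i) = (g [^] p) [^] q \<otimes> g [^] (nat j)" .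
  have gic: "g [^] i \<in> carrier G" using gc by simp
  have "h = (h \<otimes> g [^] i) \<otimes> g [^] (-i)"
    using h(1) gic int_pow_neg[OF gc, of i] by (simp add: m_assoc)
  also have "\<dots> = ((h \<otimes> g [^] i) \<otimes> (g [^] p) [^] q) \<otimes> g [^] (nat j)"
    using gmi h gc by (simp add: m_assoc)
  finally have "h = ((h \<otimes> g [^] i) \<otimes> (g [^] p) [^] q) \<otimes> g [^] (nat j)" .
  moreover have "(h \<otimes> g [^] i) \<otimes> (g [^] p) [^] q \<in> L'"
    using subgroup.m_closed[OF L'sub h(2) gpq] .
  ultimately have "h \<in> L' #> (g [^] (nat j))" unfolding r_coset_def by blast
  moreover have "nat j \<in> {0..<p}" using j0 by auto
  ultimately show "h \<in> (\<Union>j\<in>{0..<p}. L' #> (g [^] j))" by blast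
qed

lemma card_Dg:
  assumes g: "g \<in> G'" and gL: "g \<notin> L'"
  shows "card (Dg g) = p * card L'"
proof -
  have gc: "g \<in> carrier G" using g G'carr by blast
  have sD: "subgroup (Dg g) G" using Dg_subgroup[OF gc] .
  have finD: "finite (Dg g)" using subgroup_finite[OF sD] .
  have le: "card (Dg g) \<le> p * card L'"
  proof -
    have "card (Dg g) \<le> card (\<Union>j\<in>{0..<p}. L' #> (g [^] j))"
      using Dg_sub_cosets[OF g] by (rule card_mono[rotated]) (use subgroup_finite[OF L'sub] in \<open>auto simp: r_coset_def\<close>)
    also have "\<dots> \<le> (\<Sum>j\<in>{0..<p}. card (L' #> (g [^] j)))" by (rule card_UN_le) simp
    also have "\<dots> = (\<Sum>j\<in>{0..<p}. card L')"
    proof (rule sum.cong[OF refl])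
      fix j :: nat
      have "L' #> (g [^] j) \<in> rcosets L'" using gc by (auto simp: RCOSETS_def)
      then show "card (L' #> (g [^] j)) = card L'" using card_rcosets_equal L'carr by metis
    qed
    finally show ?thesis by simp
  qed
  have gt: "card L' < card (Dg g)"
    using psubset_card_mono[OF finD] L'_sub_Dg g_in_Dg[OF gc] gL by blast
  have d1: "card L' dvd card (Dg g)" using card_dvd_subgroup[OF L'sub sD L'_sub_Dg] .
  have d2: "card (Dg g) dvd card G'" using card_dvd_subgroup[OF sD G'sub Dg_sub_G'[OF g]] .
  obtain d where d: "card (Dg g) = card L' * d" using d1 by blast
  have m0: "card L' > 0" using subgroup_card_pos[OF L'sub] .
  have "card L' * d dvd card L' * (p ^ 2)" using d2 d card_G' by (simp add: power2_eq_square mult.commute mult.left_commute)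
  then have "d dvd p ^ 2" using m0 by simp
  then obtain k where k: "k \<le> 2" "d = p ^ k" using divides_primepow_nat[OF prime_p] by blast
  have "d > 1" using gt d m0 by (metis mult.right_neutral nat_mult_less_cancel_disj)
  moreover have "d \<le> p" using le d m0 by (simp add: mult.commute)
  moreover have "p < p * p" using p_gt1 by simp
  moreover have "k = 0 \<or> k = 1 \<or> k = 2" using k by auto
  ultimately have "d = p" using k by (auto simp: power2_eq_square)
  then show ?thesis using d by (simp add: mult.commute)
qed

lemma Dg_in_Cs:
  assumes g: "g \<in> G'" and gL: "g \<notin> L'"
  shows "Dg g \<in> Cs"
proof -
  have gc: "g \<in> carrier G" using g G'carr by blast
  have c: "card (Dg g) = p * card L'" using card_Dg[OF assms] .
  have "card (Dg g) < card G'" using c card_G' subgroup_card_pos[OF L'sub] p_gt1 by simp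
  then have "Dg g \<subset> G'" using Dg_sub_G'[OF g] by auto
  moreover have "L' \<subset> Dg g" using L'_sub_Dg g_in_Dg[OF gc] gL by blast
  ultimately show ?thesis using Dg_subgroup[OF gc] c by simp
qed

lemma Cs_unique:
  assumes g: "g \<in> G'" and gL: "g \<notin> L'" and C: "C \<in> Cs" and gC: "g \<in> C"
  shows "C = Dg g"
proof -
  have gc: "g \<in> carrier G" using g G'carr by blast
  have sub: "Dg g \<subseteq> C"
  proof
    fix h assume "h \<in> Dg g"
    then obtain i :: int where h: "h \<in> carrier G" "h \<otimes> g [^] i \<in> L'" by (auto simp: Dg_def)
    have sC: "subgroup C G" using C by simp
    have LC: "L' \<subseteq> C" using C by auto
    have gi: "g [^] i \<in> C" using subgroup_int_pow_closed[OF sC gC] .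
    have gic: "g [^] i \<in> carrier G" using gc by simp
    have "h = (h \<otimes> g [^] i) \<otimes> inv (g [^] i)" using h(1) gic by (simp add: m_assoc)
    also have "\<dots> \<in> C" using subgroup.m_closed[OF sC] subgroup.m_inv_closed[OF sC gi] h(2) LC by blast
    finally show "h \<in> C" .
  qed
  have "finite C" using C subgroup_finite by blast
  moreover have "card (Dg g) = card C" using card_Dg[OF g gL] C by simp
  ultimately show ?thesis using card_subset_eq[OF _ sub] by simp
qed


end


context thm_pair
begin

lemma fin_Cs: "finite Cs"
proof -
  have "Cs \<subseteq> Pow G'" by auto
  moreover have "finite G'" using subgroup_finite[OF G'sub] .
  ultimately show ?thesis using finite_subset by blast
qed

lemma card_Cs: "card Cs = p + 1"
proof -
  define m where "m = card L'"
  have m0: "m > 0" using subgroup_card_pos[OF L'sub] by (simp add: m_def)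
  have finG': "finite G'" using subgroup_finite[OF G'sub] .
  have U: "G' - L' = (\<Union>C\<in>Cs. C - L')"
  proof
    show "G' - L' \<subseteq> (\<Union>C\<in>Cs. C - L')"
    proof
      fix g assume g: "g \<in> G' - L'"
      then have "Dg g \<in> Cs" using Dg_in_Cs by blast
      moreover have "g \<in> Dg g" using g_in_Dg g G'carr by blast
      ultimately show "g \<in> (\<Union>C\<in>Cs. C - L')" using g by blast
    qed
    show "(\<Union>C\<in>Cs. C - L') \<subseteq> G' - L'" by blast
  qed
  have disj: "\<forall>C1\<in>Cs. \<forall>C2\<in>Cs. C1 \<noteq> C2 \<longrightarrow> (C1 - L') \<inter> (C2 - L') = {}"
  proof (intro ballI impI)
    fix C1 C2 assume C: "C1 \<in> Cs" "C2 \<in> Cs" "C1 \<noteq> C2"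
    show "(C1 - L') \<inter> (C2 - L') = {}"
    proof (rule ccontr)
      assume "(C1 - L') \<inter> (C2 - L') \<noteq> {}"
      then obtain g where g: "g \<in> C1" "g \<in> C2" "g \<notin> L'" by blast
      have gG: "g \<in> G'" using g C by blast
      have "C1 = Dg g" using Cs_unique[OF gG g(3) C(1) g(1)] .
      moreover have "C2 = Dg g" using Cs_unique[OF gG g(3) C(2) g(2)] .
      ultimately show False using C(3) by simp
    qed
  qed
  have fins: "\<forall>C\<in>Cs. finite (C - L')"
  proof
    fix C assume "C \<in> Cs"
    then have "subgroup C G" by simp
    then show "finite (C - L')" using subgroup_finite by simp
  qed
  have "card (G' - L') = (\<Sum>C\<in>Cs. card (C - L'))"
    using U card_UN_disjoint[OF fin_Cs fins disj] by simp
  also have "\<dots> = (\<Sum>C\<in>Cs. p * m - m)"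
  proof (rule sum.cong[OF refl])
    fix C assume C: "C \<in> Cs"
    then have "L' \<subseteq> C" "subgroup C G" by auto
    then have "L' \<subseteq> C" "finite C" using subgroup_finite by auto
    then show "card (C - L') = p * m - m" using C by (simp add: card_Diff_subset m_def finite_subset)
  qed
  also have "\<dots> = card Cs * (p * m - m)" by simp
  finally have e1: "card (G' - L') = card Cs * (p * m - m)" .
  have "card (G' - L') = p * p * m - m"
    using card_Diff_subset[OF finite_subset[OF L'sub_G' finG'] L'sub_G'] card_G' by (simp add: m_def)
  with e1 have e: "card Cs * (p * m - m) = p * p * m - m" by simp
  have "p * m \<ge> m" "p * p * m \<ge> m" using p_gt1 by simp_all
  then have "int (card Cs) * (int p * int m - int m) = int p * int p * int m - int m"
    using e by (metis (no_types, lifting) of_nat_diff of_nat_mult)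
  then have "(int (card Cs) * (int p - 1)) * int m = ((int p + 1) * (int p - 1)) * int m"
    by (simp add: algebra_simps)
  then have "int (card Cs) * (int p - 1) = (int p + 1) * (int p - 1)" using m0 by simp
  then have "int (card Cs) = int p + 1" using p_gt1 by simp
  then show ?thesis by simp
qed

lemma count_Cs:
  "card {C \<in> Cs. g \<in> C} = (if g \<in> L' then p + 1 else if g \<in> G' then 1 else 0)"
proof (cases "g \<in> L'")
  case True
  then have "{C \<in> Cs. g \<in> C} = Cs" by blast
  then show ?thesis using True card_Cs by simp
next
  case False
  show ?thesis
  proof (cases "g \<in> G'")
    case True
    have "{C \<in> Cs. g \<in> C} = {Dg g}"
      using Dg_in_Cs[OF True False] Cs_unique[OF True False] g_in_Dg True G'carr by blast
    then show ?thesis using True False by simp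
  next
    case F2: False
    have "{C \<in> Cs. g \<in> C} = {}" using F2 by blast
    then have "card {C \<in> Cs. g \<in> C} = 0" by (simp only: card.empty)
    then show ?thesis using False F2 by simp
  qed
qed

end


context thm_setup
begin

lemma fst_graph: "fst ` graph_sub K \<rho> = K"
  by (force simp: graph_sub_def image_iff)

lemma pair_interp:
  assumes "(G', \<rho>) \<in> theta_pairs G p"
  shows "thm_pair G p L G'"
  using assms by (intro thm_pair.intro[OF thm_setup_axioms] thm_pair_axioms.intro)
    (auto simp: theta_pairs_def)

lemma graph_subgroup':
  assumes "subgroup K G" "subgroup K' G" "K \<subseteq> K'" "\<rho> \<in> homs K'"
  shows "subgroup (graph_sub K \<rho>) Y"
  using graph_subgroup[OF assms(1) restrict_homs(1)[OF assms]] restrict_homs(2)[OF assms] by simp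

lemma index_graph':
  assumes "subgroup K G" "subgroup K' G" "K \<subseteq> K'" "\<rho> \<in> homs K'"
  shows "card (rcosets\<^bsub>Y\<^esub> (graph_sub K \<rho>)) * card K = card (carrier G) * p"
  using group.lagrange[OF groupY graph_subgroup'[OF assms]] by (simp add: card_graph orderY)

lemma perm_char_graph':
  assumes "subgroup K G" "subgroup K' G" "K \<subseteq> K'" "\<rho> \<in> homs K'" and x: "(g, t) \<in> carrier Y"
  shows "int (perm_char Y (graph_sub K \<rho>) (g, t)) * int (card K) =
           (if g \<in> K \<and> t = \<rho> g then int (card (carrier G) * p) else 0)"
proof -
  have "perm_char Y (graph_sub K \<rho>) (g, t) = (if g \<in> K \<and> t = \<rho> g then card (rcosets\<^bsub>Y\<^esub> (graph_sub K \<rho>)) else 0)"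
    using perm_char_eq[OF graph_subgroup'[OF assms(1-4)] x] by (simp add: mem_graph)
  then show ?thesis using index_graph'[OF assms(1-4)]
    by (metis (no_types, lifting) mult_eq_0_iff of_nat_0 of_nat_mult)
qed

lemma theta_top:
  assumes P: "(G', \<rho>) \<in> theta_pairs G p" and K: "subgroup K G" "\<sigma> \<in> homs K"
    and le: "card G' \<le> card K"
  shows "Theta G p L G' \<rho> (graph_sub K \<sigma>) = (if K = G' \<and> \<sigma> = \<rho> then int p else 0)"
proof -
  interpret P: thm_pair G p L G' using pair_interp[OF P] .
  have fG': "finite G'" using subgroup_finite[OF P.G'sub] .
  have 1: "bsub (graph_sub P.L' \<rho>) (graph_sub K \<sigma>) = 0"
  proof -
    have "graph_sub P.L' \<rho> \<noteq> graph_sub K \<sigma>"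
    proof
      assume "graph_sub P.L' \<rho> = graph_sub K \<sigma>"
      then have "P.L' = K" using fst_graph by metis
      moreover have "card P.L' < card G'" using psubset_card_mono[OF fG' P.L'ps] .
      ultimately show False using le by simp
    qed
    then show ?thesis by (simp add: bsub_def)
  qed
  have 2: "bsub (graph_sub C' \<rho>) (graph_sub K \<sigma>) = 0" if C: "C' \<in> P.Cs" for C'
  proof -
    have "graph_sub C' \<rho> \<noteq> graph_sub K \<sigma>"
    proof
      assume "graph_sub C' \<rho> = graph_sub K \<sigma>"
      then have "C' = K" using fst_graph by metis
      moreover have "C' \<subset> G'" using C by simp
      then have "card C' < card G'" using psubset_card_mono[OF fG'] by blast
      ultimately show False using le by simp
    qed
    then show ?thesis by (simp add: bsub_def)
  qed
  have rho: "\<rho> \<in> homs G'" using P by (simp add: theta_pairs_def)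
  have 3: "bsub (graph_sub G' \<rho>) (graph_sub K \<sigma>) = (if K = G' \<and> \<sigma> = \<rho> then 1 else 0)"
    using graph_inj'[OF rho K(2)] by (auto simp: bsub_def)
  show ?thesis unfolding Theta_def using 1 2 3 by simp
qed

lemma theta_support:
  assumes P: "(G', \<rho>) \<in> theta_pairs G p" and nz: "Theta G p L G' \<rho> T \<noteq> 0"
  shows "T = graph_sub G' \<rho> \<or> (\<exists>K \<sigma>. subgroup K G \<and> \<sigma> \<in> homs K \<and> T = graph_sub K \<sigma> \<and> card K < card G')"
proof (rule ccontr)
  interpret P: thm_pair G p L G' using pair_interp[OF P] .
  assume A: "\<not> ?thesis"
  have fG': "finite G'" using subgroup_finite[OF P.G'sub] .
  have rho: "\<rho> \<in> homs G'" using P by (simp add: theta_pairs_def)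
  have ok: "T \<noteq> graph_sub K \<rho>" if "subgroup K G" "K \<subset> G'" for K
  proof
    assume T: "T = graph_sub K \<rho>"
    have "(\<lambda>x. if x \<in> K then \<rho> x else 0) \<in> homs K" "graph_sub K (\<lambda>x. if x \<in> K then \<rho> x else 0) = graph_sub K \<rho>"
      using restrict_homs[OF that(1) P.G'sub _ rho] that(2) by auto
    moreover have "card K < card G'" using psubset_card_mono[OF fG' that(2)] .
    ultimately show False using A T that(1) by metis
  qed
  have 1: "bsub (graph_sub P.L' \<rho>) T = 0" using ok[OF P.L'sub P.L'ps] by (auto simp: bsub_def)
  have 2: "bsub (graph_sub C' \<rho>) T = 0" if C: "C' \<in> P.Cs" for C'
    using ok[of C'] C by (auto simp: bsub_def)
  have 3: "bsub (graph_sub G' \<rho>) T = 0" using A by (auto simp: bsub_def)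
  have "Theta G p L G' \<rho> T = 0" unfolding Theta_def using 1 2 3 by simp
  then show False using nz by simp
qed

end


context thm_setup
begin

lemma theta_in_rel_burnside:
  assumes P: "(G', \<rho>) \<in> theta_pairs G p"
  shows "Theta G p L G' \<rho> \<in> rel_burnside G p"
proof -
  have rho: "\<rho> \<in> homs G'" and G'sub: "subgroup G' G" using P by (auto simp: theta_pairs_def)
  have "\<exists>K \<sigma>. subgroup K G \<and> \<sigma> \<in> homs K \<and> T = graph_sub K \<sigma>" if "Theta G p L G' \<rho> T \<noteq> 0" for T
    using theta_support[OF P that] rho G'sub by blast
  moreover then have "subgroup T Y" if "Theta G p L G' \<rho> T \<noteq> 0" for T
    using that graph_subgroup by blast
  ultimately show ?thesis by (auto simp: rel_burnside_def burnside_def)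
qed

lemma theta_char:
  assumes P: "(G', \<rho>) \<in> theta_pairs G p" and x: "(g, t) \<in> carrier Y"
  shows "(\<Sum>S\<in>{S. subgroup S Y}. Theta G p L G' \<rho> S * int (perm_char Y S (g, t))) = 0"
proof -
  interpret P: thm_pair G p L G' using pair_interp[OF P] .
  have rho: "\<rho> \<in> homs G'" using P by (simp add: theta_pairs_def)
  define f where "f S = int (perm_char Y S (g, t))" for S
  define N where "N = int (card (carrier G) * p)"
  define m where "m = int (card P.L')"
  have LG: "P.L' \<subseteq> G'" using P.L'sub_G' .
  have subL: "subgroup (graph_sub P.L' \<rho>) Y" using graph_subgroup'[OF P.L'sub P.G'sub LG rho] .
  have subC: "subgroup (graph_sub C \<rho>) Y" if "C \<in> P.Cs" for C
    using graph_subgroup'[of C G' \<rho>] that P.G'sub rho by auto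
  have subG: "subgroup (graph_sub G' \<rho>) Y" using graph_subgroup[OF P.G'sub rho] .
  have "(\<Sum>S\<in>{S. subgroup S Y}. Theta G p L G' \<rho> S * f S) =
     (\<Sum>S\<in>{S. subgroup S Y}. bsub (graph_sub P.L' \<rho>) S * f S)
     - (\<Sum>S\<in>{S. subgroup S Y}. \<Sum>C\<in>P.Cs. bsub (graph_sub C \<rho>) S * f S)
     + int p * (\<Sum>S\<in>{S. subgroup S Y}. bsub (graph_sub G' \<rho>) S * f S)"
    unfolding Theta_def
    by (simp add: algebra_simps sum.distrib sum_subtractf sum_distrib_left sum_distrib_right)
  also have "(\<Sum>S\<in>{S. subgroup S Y}. \<Sum>C\<in>P.Cs. bsub (graph_sub C \<rho>) S * f S)
      = (\<Sum>C\<in>P.Cs. f (graph_sub C \<rho>))"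
    by (subst sum.swap) (rule sum.cong[OF refl], rule sum_bsub[OF subC])
  finally have sumeq: "(\<Sum>S\<in>{S. subgroup S Y}. Theta G p L G' \<rho> S * f S) =
      f (graph_sub P.L' \<rho>) - (\<Sum>C\<in>P.Cs. f (graph_sub C \<rho>)) + int p * f (graph_sub G' \<rho>)"
    using sum_bsub[OF subL] sum_bsub[OF subG] by simp
  have hA: "f (graph_sub P.L' \<rho>) * m = (if g \<in> P.L' \<and> t = \<rho> g then N else 0)"
    using perm_char_graph'[OF P.L'sub P.G'sub LG rho x] by (simp add: f_def m_def N_def)
  have hC: "f (graph_sub C \<rho>) * (int p * m) = (if g \<in> C \<and> t = \<rho> g then N else 0)" if C: "C \<in> P.Cs" for C
  proof -
    have "subgroup C G" "C \<subseteq> G'" "card C = p * card P.L'" using C by auto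
    then show ?thesis using perm_char_graph'[of C G' \<rho> g t] P.G'sub rho x by (simp add: f_def m_def N_def)
  qed
  have hG: "f (graph_sub G' \<rho>) * (int p * int p * m) = (if g \<in> G' \<and> t = \<rho> g then N else 0)"
    using perm_char_graph'[OF P.G'sub P.G'sub subset_refl rho x] P.card_G' by (simp add: f_def m_def N_def)
  have hB: "(\<Sum>C\<in>P.Cs. f (graph_sub C \<rho>)) * (int p * m) =
      (if t = \<rho> g then int (card {C \<in> P.Cs. g \<in> C}) * N else 0)"
  proof -
    have "(\<Sum>C\<in>P.Cs. f (graph_sub C \<rho>)) * (int p * m) = (\<Sum>C\<in>P.Cs. f (graph_sub C \<rho>) * (int p * m))"
      by (simp add: sum_distrib_right)
    also have "\<dots> = (\<Sum>C\<in>P.Cs. if g \<in> C \<and> t = \<rho> g then N else 0)"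
      using hC by (rule sum.cong[OF refl])
    also have "\<dots> = (if t = \<rho> g then int (card {C \<in> P.Cs. g \<in> C}) * N else 0)"
    proof (cases "t = \<rho> g")
      case True
      then have "(\<Sum>C\<in>P.Cs. if g \<in> C \<and> t = \<rho> g then N else 0) = (\<Sum>C\<in>P.Cs. if g \<in> C then N else 0)"
        by simp
      also have "\<dots> = (\<Sum>C\<in>{C \<in> P.Cs. g \<in> C}. N)"
        by (rule sum.inter_filter[OF P.fin_Cs, symmetric])
      also have "\<dots> = int (card {C \<in> P.Cs. g \<in> C}) * N" by simp
      finally show ?thesis using True by simp
    qed simp
    finally show ?thesis .
  qed
  have m0: "m > 0" using subgroup_card_pos[OF P.L'sub] by (simp add: m_def)
  have p0: "int p > 0" using p_gt1 by simp
  define Xv where "Xv = f (graph_sub P.L' \<rho>) - (\<Sum>C\<in>P.Cs. f (graph_sub C \<rho>)) + int p * f (graph_sub G' \<rho>)"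
  have "Xv * (int p * int p * m) = int p * int p * (f (graph_sub P.L' \<rho>) * m)
       - int p * ((\<Sum>C\<in>P.Cs. f (graph_sub C \<rho>)) * (int p * m))
       + int p * (f (graph_sub G' \<rho>) * (int p * int p * m))"
    by (simp add: Xv_def algebra_simps)
  also have "\<dots> = 0"
  proof (cases "t = \<rho> g")
    case False
    then show ?thesis unfolding hA hB hG by simp
  next
    case True
    note cnt = P.count_Cs[of g]
    show ?thesis
    proof (cases "g \<in> P.L'")
      case True
      then have "g \<in> G'" using LG by blast
      then show ?thesis unfolding hA hB hG cnt using True \<open>t = \<rho> g\<close> by (simp add: algebra_simps)
    next
      case False
      then show ?thesis unfolding hA hB hG cnt using \<open>t = \<rho> g\<close> by (cases "g \<in> G'") (simp_all add: algebra_simps)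
    qed
  qed
  finally have "Xv * (int p * int p * m) = 0" .
  then have "Xv = 0" using m0 p0 by simp
  then show ?thesis using sumeq by (simp add: Xv_def f_def)
qed

lemma theta_in_rel_brauer:
  assumes P: "(G', \<rho>) \<in> theta_pairs G p"
  shows "Theta G p L G' \<rho> \<in> rel_brauer G p"
proof -
  have rb: "Theta G p L G' \<rho> \<in> rel_burnside G p" using theta_in_rel_burnside[OF P] .
  then have "Theta G p L G' \<rho> \<in> burnside Y" by (simp add: rel_burnside_def)
  moreover have "\<forall>x\<in>carrier Y. (\<Sum>S\<in>{S. subgroup S Y}. Theta G p L G' \<rho> S * int (perm_char Y S x)) = 0"
    using theta_char[OF P] by auto
  ultimately show ?thesis using rb by (simp add: rel_brauer_def brauer_rel_def)
qed

end


context thm_setup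
begin

lemma fin_funs: "finite {\<rho> :: 'a \<Rightarrow> int. \<forall>x. \<rho> x \<in> {0..<int p} \<and> (x \<notin> carrier G \<longrightarrow> \<rho> x = 0)}"
  (is "finite ?Hs")
proof -
  have inj: "inj_on (\<lambda>\<rho>. restrict \<rho> (carrier G)) ?Hs"
  proof (rule inj_onI)
    fix \<rho> \<sigma> assume a: "\<rho> \<in> ?Hs" "\<sigma> \<in> ?Hs" "restrict \<rho> (carrier G) = restrict \<sigma> (carrier G)"
    show "\<rho> = \<sigma>"
    proof
      fix x show "\<rho> x = \<sigma> x"
      proof (cases "x \<in> carrier G")
        case True then show ?thesis using a(3) by (metis restrict_apply')
      next
        case False then show ?thesis using a(1,2) by simp
      qed
    qed
  qed
  have "(\<lambda>\<rho>. restrict \<rho> (carrier G)) ` ?Hs \<subseteq> PiE (carrier G) (\<lambda>_. {0..<int p})"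
    by auto
  moreover have "finite (PiE (carrier G) (\<lambda>_. {0..<int p}))" using finG by (simp add: finite_PiE)
  ultimately have "finite ((\<lambda>\<rho>. restrict \<rho> (carrier G)) ` ?Hs)" using finite_subset by blast
  then show ?thesis using finite_imageD[OF _ inj] by blast
qed

lemma homs_sub_funs:
  assumes "subgroup K G"
  shows "homs K \<subseteq> {\<rho> :: 'a \<Rightarrow> int. \<forall>x. \<rho> x \<in> {0..<int p} \<and> (x \<notin> carrier G \<longrightarrow> \<rho> x = 0)}"
proof
  fix \<rho> assume r: "\<rho> \<in> homs K"
  have "K \<subseteq> carrier G" using assms subgroup.subset by blast
  then show "\<rho> \<in> {\<rho>. \<forall>x. \<rho> x \<in> {0..<int p} \<and> (x \<notin> carrier G \<longrightarrow> \<rho> x = 0)}"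
    using homs_range[OF assms r] homs_D(2)[OF assms r] by auto
qed

lemma fin_pairs: "finite (theta_pairs G p)"
proof -
  have "theta_pairs G p \<subseteq> Pow (carrier G) \<times> {\<rho> :: 'a \<Rightarrow> int. \<forall>x. \<rho> x \<in> {0..<int p} \<and> (x \<notin> carrier G \<longrightarrow> \<rho> x = 0)}"
  proof
    fix q assume "q \<in> theta_pairs G p"
    then obtain K \<rho> where q: "q = (K, \<rho>)" "subgroup K G" "\<rho> \<in> homs K"
      by (auto simp: theta_pairs_def)
    then show "q \<in> Pow (carrier G) \<times> {\<rho> :: 'a \<Rightarrow> int. \<forall>x. \<rho> x \<in> {0..<int p} \<and> (x \<notin> carrier G \<longrightarrow> \<rho> x = 0)}"
      using homs_sub_funs[OF q(2)] subgroup.subset[OF q(2)] by auto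
  qed
  moreover have "finite (Pow (carrier G) \<times> {\<rho> :: 'a \<Rightarrow> int. \<forall>x. \<rho> x \<in> {0..<int p} \<and> (x \<notin> carrier G \<longrightarrow> \<rho> x = 0)})"
    using finG fin_funs by simp
  ultimately show ?thesis using finite_subset by blast
qed

lemma fin_support: "finite {T. b T \<noteq> 0}" if "b \<in> burnside Y"
proof -
  have "{T. b T \<noteq> 0} \<subseteq> {S. subgroup S Y}" using that by (auto simp: burnside_def)
  then show ?thesis using fin_subgroups by (rule finite_subset)
qed

lemma cyclic_gen:
  assumes K: "subgroup K G" and cyc: "cyclic_group (subgroup_generated G K)"
  obtains g where "g \<in> K" "\<And>y. y \<in> K \<Longrightarrow> \<exists>n::int. y = g [^] n"
proof -
  interpret H: group "subgroup_generated G K" by simp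
  have cK: "carrier (subgroup_generated G K) = K"
    using K subgroup.carrier_subgroup_generated_subgroup by blast
  obtain g where g: "g \<in> K" "K = range (\<lambda>n::int. g [^]\<^bsub>subgroup_generated G K\<^esub> n)"
    using H.cyclic_group cyc cK by auto
  have "\<And>n::int. g [^]\<^bsub>subgroup_generated G K\<^esub> n = g [^] n"
    using int_pow_subgroup_generated g(1) cK by simp
  then show ?thesis using that g by auto
qed

lemma hom_cyclic_eq:
  assumes K: "subgroup K G" and cyc: "cyclic_group (subgroup_generated G K)"
    and s: "\<sigma> \<in> homs K" and s': "\<sigma>' \<in> homs K"
    and g: "g \<in> K" and gen: "\<And>y. y \<in> K \<Longrightarrow> \<exists>n::int. y = g [^] n"
    and eq: "\<sigma> g = \<sigma>' g"
  shows "\<sigma> = \<sigma>'"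
proof
  fix y show "\<sigma> y = \<sigma>' y"
  proof (cases "y \<in> K")
    case False then show ?thesis using homs_D(2)[OF K s] homs_D(2)[OF K s'] by simp
  next
    case True
    then obtain n :: int where n: "y = g [^] n" using gen by blast
    interpret H: group "subgroup_generated G K" by simp
    have cK: "carrier (subgroup_generated G K) = K"
      using K subgroup.carrier_subgroup_generated_subgroup by blast
    have gH: "g \<in> carrier (subgroup_generated G K)" using g cK by simp
    have pw: "g [^] n = g [^]\<^bsub>subgroup_generated G K\<^esub> n"
      using int_pow_subgroup_generated gH by simp
    have hs: "\<sigma> \<in> hom (subgroup_generated G K) (Cp p)" "\<sigma>' \<in> hom (subgroup_generated G K) (Cp p)"
      using s s' by (auto simp: homs_to_Cp_def)
    have "\<sigma> y = \<sigma> g [^]\<^bsub>Cp p\<^esub> n"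
      using hom_int_pow[OF hs(1) gH H.is_group group_integer_mod_group] n pw by simp
    also have "\<dots> = \<sigma>' g [^]\<^bsub>Cp p\<^esub> n" using eq by simp
    also have "\<dots> = \<sigma>' y"
      using hom_int_pow[OF hs(2) gH H.is_group group_integer_mod_group] n pw by simp
    finally show ?thesis .
  qed
qed

lemma cyclic_zero:
  assumes rb: "r \<in> brauer_rel Y"
    and cyc: "\<And>T. r T \<noteq> 0 \<Longrightarrow> \<exists>K \<sigma>. subgroup K G \<and> cyclic_group (subgroup_generated G K) \<and> \<sigma> \<in> homs K \<and> T = graph_sub K \<sigma>"
  shows "r T = 0"
proof (rule ccontr)
  assume nz: "r T \<noteq> 0"
  have bur: "r \<in> burnside Y" and rel: "\<forall>x\<in>carrier Y. (\<Sum>S\<in>{S. subgroup S Y}. r S * int (perm_char Y S x)) = 0"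
    using rb by (auto simp: brauer_rel_def)
  define Sp where "Sp = {T. r T \<noteq> 0}"
  have finSp: "finite Sp" using fin_support[OF bur] by (simp add: Sp_def)
  have "Sp \<noteq> {}" using nz by (auto simp: Sp_def)
  then have ne: "card ` Sp \<noteq> {}" by simp
  have fin': "finite (card ` Sp)" using finSp by simp
  obtain T0 where T0: "T0 \<in> Sp" and eqm: "card T0 = Max (card ` Sp)"
    using Max_in[OF fin' ne] by (metis imageE)
  have mx: "card T \<le> card T0" if "T \<in> Sp" for T
    using Max_ge[OF fin'] that eqm by simp
  have "r T0 \<noteq> 0" using T0 by (simp add: Sp_def)
  from cyc[OF this] obtain C \<sigma> where C: "subgroup C G" "cyclic_group (subgroup_generated G C)" "\<sigma> \<in> homs C" "T0 = graph_sub C \<sigma>"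
    by blast
  obtain g where g: "g \<in> C" and gen: "\<And>y. y \<in> C \<Longrightarrow> \<exists>n::int. y = g [^] n"
    using cyclic_gen[OF C(1,2)] by blast
  have gc: "g \<in> carrier G" using subgroup.mem_carrier[OF C(1) g] .
  define x0 where "x0 = (g, \<sigma> g)"
  have x0Y: "x0 \<in> carrier Y" using gc homs_range[OF C(1,3)] by (simp add: x0_def carrier_Cp)
  have x0T: "x0 \<in> T0" using g C(4) by (simp add: x0_def mem_graph)
  have subT0: "subgroup T0 Y" using graph_subgroup[OF C(1,3)] C(4) by simp
  have other: "r S * int (perm_char Y S x0) = 0" if S: "subgroup S Y" "S \<noteq> T0" for S
  proof (rule ccontr)
    assume "r S * int (perm_char Y S x0) \<noteq> 0"
    then have rS: "r S \<noteq> 0" and pS: "perm_char Y S x0 \<noteq> 0" by auto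
    from cyc[OF rS] obtain C' \<sigma>' where C': "subgroup C' G" "cyclic_group (subgroup_generated G C')" "\<sigma>' \<in> homs C'" "S = graph_sub C' \<sigma>'"
      by blast
    have "x0 \<in> S" using pS perm_char_eq[OF S(1) x0Y] by (auto split: if_splits)
    then have gC': "g \<in> C'" and sg: "\<sigma>' g = \<sigma> g" using C'(4) by (auto simp: x0_def mem_graph)
    have CC': "C \<subseteq> C'"
    proof
      fix y assume "y \<in> C"
      from gen[OF this] obtain n :: int where "y = g [^] n" by blast
      then show "y \<in> C'" using subgroup_int_pow_closed[OF C'(1) gC'] by simp
    qed
    have "S \<in> Sp" using rS by (simp add: Sp_def)
    then have "card S \<le> card T0" by (rule mx)
    then have "card (graph_sub C' \<sigma>') \<le> card (graph_sub C \<sigma>)" by (simp only: C(4) C'(4))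
    then have "card C' \<le> card C" by (simp only: card_graph)
    then have "card C = card C'" using card_mono[OF subgroup_finite[OF C'(1)] CC'] by linarith
    then have CeqC': "C = C'" by (rule card_subset_eq[OF subgroup_finite[OF C'(1)] CC'])
    have s'C: "\<sigma>' \<in> homs C" using C'(3) CeqC' by simp
    have "\<sigma> = \<sigma>'" using hom_cyclic_eq[OF C(1,2) C(3) s'C g gen sg[symmetric]] .
    then have "S = T0" using C(4) C'(4) CeqC' by simp
    then show False using S(2) by simp
  qed
  have "(\<Sum>S\<in>{S. subgroup S Y}. r S * int (perm_char Y S x0)) = (\<Sum>S\<in>{S. subgroup S Y}. if S = T0 then r T0 * int (perm_char Y T0 x0) else 0)"
  proof (rule sum.cong[OF refl])
    fix S assume Sm: "S \<in> {S. subgroup S Y}"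
    show "r S * int (perm_char Y S x0) = (if S = T0 then r T0 * int (perm_char Y T0 x0) else 0)"
    proof (cases "S = T0")
      case True then show ?thesis by simp
    next
      case False
      have "subgroup S Y" using Sm by simp
      from other[OF this False] show ?thesis using False by simp
    qed
  qed
  also have "\<dots> = r T0 * int (perm_char Y T0 x0)" using fin_subgroups subT0 by simp
  finally have e: "(\<Sum>S\<in>{S. subgroup S Y}. r S * int (perm_char Y S x0)) = r T0 * int (perm_char Y T0 x0)" .
  have "(\<Sum>S\<in>{S. subgroup S Y}. r S * int (perm_char Y S x0)) = 0" using bspec[OF rel x0Y] .
  with e have "r T0 * int (perm_char Y T0 x0) = 0" by simp
  moreover have "perm_char Y T0 x0 \<noteq> 0"
  proof -
    have "card (rcosets\<^bsub>Y\<^esub> T0) * card T0 = order Y" using group.lagrange[OF groupY subT0] .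
    moreover have "order Y > 0" using orderY p_gt1 finG subgroup_card_pos[OF subgroup_self] by simp
    ultimately have "card (rcosets\<^bsub>Y\<^esub> T0) \<noteq> 0" by (metis mult_is_0 neq0_conv)
    then show ?thesis using perm_char_eq[OF subT0 x0Y] x0T by simp
  qed
  ultimately show False using T0 by (simp add: Sp_def)
qed

end


context thm_setup
begin

definition Th :: "'a set \<times> ('a \<Rightarrow> int) \<Rightarrow> ('a \<times> int) set \<Rightarrow> int" where
  "Th q = Theta G p L (fst q) (snd q)"

lemma sum_conv:
  "(\<Sum>(G', \<rho>) \<in> A. c (G', \<rho>) * Theta G p L G' \<rho> T) = (\<Sum>q\<in>A. c q * Th q T)"
  by (rule sum.cong) (auto simp: Th_def)

lemma theta_sum_single:
  assumes K: "(K, \<sigma>) \<in> theta_pairs G p"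
    and cz: "\<And>q. q \<in> theta_pairs G p \<Longrightarrow> c q \<noteq> 0 \<Longrightarrow> card (fst q) \<le> card K"
  shows "(\<Sum>q\<in>theta_pairs G p. c q * Th q (graph_sub K \<sigma>)) = c (K, \<sigma>) * int p"
proof -
  have Ks: "subgroup K G" "\<sigma> \<in> homs K" using K by (auto simp: theta_pairs_def)
  have "(\<Sum>q\<in>theta_pairs G p. c q * Th q (graph_sub K \<sigma>)) =
        (\<Sum>q\<in>theta_pairs G p. if q = (K, \<sigma>) then c (K, \<sigma>) * int p else 0)"
  proof (rule sum.cong[OF refl])
    fix q assume q: "q \<in> theta_pairs G p"
    obtain G' \<rho> where qq: "q = (G', \<rho>)" by fastforce
    show "c q * Th q (graph_sub K \<sigma>) = (if q = (K, \<sigma>) then c (K, \<sigma>) * int p else 0)"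
    proof (cases "c q = 0")
      case True
      then show ?thesis using qq by auto
    next
      case False
      then have "card G' \<le> card K" using cz[OF q] qq by simp
      then have "Theta G p L G' \<rho> (graph_sub K \<sigma>) = (if K = G' \<and> \<sigma> = \<rho> then int p else 0)"
        using theta_top[of G' \<rho> K \<sigma>] q qq Ks by simp
      then show ?thesis using qq by (auto simp: Th_def)
    qed
  qed
  also have "\<dots> = c (K, \<sigma>) * int p" using fin_pairs K by simp
  finally show ?thesis .
qed

lemma theta_indep: "int_lin_indep_fam (theta_pairs G p) (\<lambda>(G', \<rho>). Theta G p L G' \<rho>)"
  unfolding int_lin_indep_fam_def
proof (intro allI impI ballI)
  fix c i
  assume h: "\<forall>T. (\<Sum>i\<in>theta_pairs G p. c i * (case i of (G', \<rho>) \<Rightarrow> Theta G p L G' \<rho>) T) = 0"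
    and i: "i \<in> theta_pairs G p"
  have h': "(\<Sum>q\<in>theta_pairs G p. c q * Th q T) = 0" for T
  proof -
    have "(\<Sum>q\<in>theta_pairs G p. c q * Th q T) = (\<Sum>i\<in>theta_pairs G p. c i * (case i of (G', \<rho>) \<Rightarrow> Theta G p L G' \<rho>) T)"
      by (rule sum.cong) (auto simp: Th_def split: prod.splits)
    then show ?thesis using h by simp
  qed
  show "c i = 0"
  proof (rule ccontr)
    assume ci: "c i \<noteq> 0"
    define Z where "Z = {q \<in> theta_pairs G p. c q \<noteq> 0}"
    have finZ: "finite Z" using fin_pairs by (simp add: Z_def)
    have "i \<in> Z" using i ci by (simp add: Z_def)
    then have ne: "(card \<circ> fst) ` Z \<noteq> {}" by blast
    have fin': "finite ((card \<circ> fst) ` Z)" using finZ by simp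
    obtain q0 where q0: "q0 \<in> Z" and eqm: "(card \<circ> fst) q0 = Max ((card \<circ> fst) ` Z)"
      using Max_in[OF fin' ne] by (metis imageE)
    have mx: "card (fst q) \<le> card (fst q0)" if "q \<in> Z" for q
      using Max_ge[OF fin'] that eqm by simp
    obtain K \<sigma> where K: "q0 = (K, \<sigma>)" by fastforce
    have Kp: "(K, \<sigma>) \<in> theta_pairs G p" using q0 K by (simp add: Z_def)
    have "(\<Sum>q\<in>theta_pairs G p. c q * Th q (graph_sub K \<sigma>)) = c (K, \<sigma>) * int p"
      by (rule theta_sum_single[OF Kp]) (use mx K in \<open>auto simp: Z_def\<close>)
    then have "c (K, \<sigma>) * int p = 0" using h' by simp
    then show False using q0 K p_gt1 by (simp add: Z_def)
  qed
qed

definition good :: "nat \<Rightarrow> (('a \<times> int) set \<Rightarrow> int) \<Rightarrow> bool" where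
  "good n b \<longleftrightarrow> (\<forall>T. b T \<noteq> 0 \<longrightarrow> (\<exists>K \<sigma>. subgroup K G \<and> \<sigma> \<in> homs K \<and> T = graph_sub K \<sigma> \<and>
       (cyclic_group (subgroup_generated G K) \<or> card K < n)))"

lemma good_step:
  assumes "good n b"
  shows "\<exists>k c. good 0 (\<lambda>T. int p ^ k * b T - (\<Sum>q\<in>theta_pairs G p. c q * Th q T))"
  using assms
proof (induction n arbitrary: b)
  case 0
  show ?case
    apply (rule exI[of _ 0])
    apply (rule exI[of _ "\<lambda>_. 0"])
    using 0 by simp
next
  case (Suc n)
  define c1 where "c1 q = (if card (fst q) = n then b (graph_sub (fst q) (snd q)) else 0)" for q
  define b' where "b' T = int p * b T - (\<Sum>q\<in>theta_pairs G p. c1 q * Th q T)" for T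
  have A: "b' (graph_sub K \<sigma>) = 0" if K: "(K, \<sigma>) \<in> theta_pairs G p" "card K = n" for K \<sigma>
  proof -
    have cz: "card (fst q) \<le> card K" if "q \<in> theta_pairs G p" "c1 q \<noteq> 0" for q
    proof -
      have "card (fst q) = n" using that(2) unfolding c1_def by (cases "card (fst q) = n") auto
      then show ?thesis using K(2) by simp
    qed
    have "(\<Sum>q\<in>theta_pairs G p. c1 q * Th q (graph_sub K \<sigma>)) = c1 (K, \<sigma>) * int p"
      using theta_sum_single[of K \<sigma> c1, OF K(1) cz] .
    moreover have "c1 (K, \<sigma>) = b (graph_sub K \<sigma>)" using K(2) by (simp add: c1_def)
    ultimately have "(\<Sum>q\<in>theta_pairs G p. c1 q * Th q (graph_sub K \<sigma>)) = b (graph_sub K \<sigma>) * int p"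
      by simp
    then show ?thesis unfolding b'_def by simp
  qed
  have "good n b'"
    unfolding good_def
  proof (intro allI impI)
    fix T assume nz: "b' T \<noteq> 0"
    show "\<exists>K \<sigma>. subgroup K G \<and> \<sigma> \<in> homs K \<and> T = graph_sub K \<sigma> \<and>
       (cyclic_group (subgroup_generated G K) \<or> card K < n)"
    proof (cases "b T = 0")
      case False
      from Suc.prems False obtain K \<sigma> where Ks: "subgroup K G" "\<sigma> \<in> homs K" "T = graph_sub K \<sigma>"
        "cyclic_group (subgroup_generated G K) \<or> card K < Suc n"
        unfolding good_def by blast
      show ?thesis
      proof (cases "cyclic_group (subgroup_generated G K) \<or> card K < n")
        case True then show ?thesis using Ks by blast
      next
        case F: False
        then have "card K = n" "(K, \<sigma>) \<in> theta_pairs G p" using Ks by (auto simp: theta_pairs_def)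
        then have "b' T = 0" using A Ks(3) by simp
        then show ?thesis using nz by simp
      qed
    next
      case True
      then have "(\<Sum>q\<in>theta_pairs G p. c1 q * Th q T) \<noteq> 0" using nz by (simp add: b'_def)
      then obtain q where q: "q \<in> theta_pairs G p" "c1 q * Th q T \<noteq> 0"
        by (meson sum.not_neutral_contains_not_neutral)
      obtain G' \<rho> where qq: "q = (G', \<rho>)" by fastforce
      have cn: "card G' = n" using q(2) qq by (auto simp: c1_def split: if_splits)
      have "Theta G p L G' \<rho> T \<noteq> 0" using q(2) qq by (simp add: Th_def)
      from theta_support[OF q(1)[unfolded qq] this]
      show ?thesis
      proof
        assume "T = graph_sub G' \<rho>"
        then have "b' T = 0" using A[of G' \<rho>] q(1) qq cn by simp
        then show ?thesis using nz by simp
      next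
        assume "\<exists>K \<sigma>. subgroup K G \<and> \<sigma> \<in> homs K \<and> T = graph_sub K \<sigma> \<and> card K < card G'"
        then show ?thesis using cn by blast
      qed
    qed
  qed
  from Suc.IH[OF this] obtain k c where kc: "good 0 (\<lambda>T. int p ^ k * b' T - (\<Sum>q\<in>theta_pairs G p. c q * Th q T))"
    by blast
  define c' where "c' q = c q + int p ^ k * c1 q" for q
  have "(\<lambda>T. int p ^ Suc k * b T - (\<Sum>q\<in>theta_pairs G p. c' q * Th q T)) =
        (\<lambda>T. int p ^ k * b' T - (\<Sum>q\<in>theta_pairs G p. c q * Th q T))"
    by (rule ext) (simp add: b'_def c'_def algebra_simps sum.distrib sum_distrib_left)
  then have "good 0 (\<lambda>T. int p ^ Suc k * b T - (\<Sum>q\<in>theta_pairs G p. c' q * Th q T))"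
    using kc by simp
  then show ?case by blast
qed

end


definition qscale :: "rat \<Rightarrow> ('c \<Rightarrow> rat) \<Rightarrow> ('c \<Rightarrow> rat)" where
  "qscale c f = (\<lambda>x. c * f x)"

lemma vs_q: "vector_space qscale"
  by unfold_locales (auto simp: qscale_def fun_eq_iff algebra_simps plus_fun_def)

interpretation QV: vector_space qscale by (rule vs_q)

lemma sum_fun_apply: "(\<Sum>v\<in>A. f v) x = (\<Sum>v\<in>A. f v x)"
  by (induction A rule: infinite_finite_induct) (auto simp: plus_fun_def zero_fun_def)

lemma common_denom:
  fixes u :: "'c \<Rightarrow> rat"
  shows "finite t \<Longrightarrow> \<exists>D::int. D > 0 \<and> (\<forall>v\<in>t. \<exists>z::int. of_int D * u v = of_int z)"
proof (induction t rule: finite_induct)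
  case empty then show ?case by (intro exI[of _ 1]) simp
next
  case (insert x F)
  then obtain D :: int where D: "D > 0" "\<forall>v\<in>F. \<exists>z::int. of_int D * u v = of_int z" by blast
  obtain a b where ab: "quotient_of (u x) = (a, b)" by fastforce
  have b0: "b > 0" using quotient_of_denom_pos[OF ab] .
  have ux: "u x = of_int a / of_int b" using quotient_of_div[OF ab] .
  have "\<forall>v\<in>insert x F. \<exists>z::int. of_int (D * b) * u v = of_int z"
  proof
    fix v assume v: "v \<in> insert x F"
    show "\<exists>z::int. of_int (D * b) * u v = of_int z"
    proof (cases "v = x")
      case True
      have "of_int (D * b) * u v = (of_int (D * a) :: rat)" using True ux b0 by simp
      then show ?thesis by blast
    next
      case False
      then have "v \<in> F" using v by simp
      then obtain z where "of_int D * u v = (of_int z :: rat)" using D by blast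
      then have "of_int (D * b) * u v = (of_int (b * z) :: rat)" by (simp add: algebra_simps)
      then show ?thesis by blast
    qed
  qed
  then show ?case using D b0 by (intro exI[of _ "D * b"]) simp
qed

context thm_setup
begin

lemma Th_eq: "(\<lambda>(G', \<rho>). Theta G p L G' \<rho>) = Th"
  by (auto simp: fun_eq_iff Th_def)

lemma theta_indep_Th: "int_lin_indep_fam (theta_pairs G p) Th"
  using theta_indep Th_eq by simp

lemma Th_in: "q \<in> theta_pairs G p \<Longrightarrow> Th q \<in> rel_brauer G p"
  using theta_in_rel_brauer by (cases q) (simp add: Th_def)

lemma spanning:
  assumes b: "b \<in> rel_brauer G p"
  shows "\<exists>(k::nat) c. \<forall>T. int p ^ k * b T = (\<Sum>q\<in>theta_pairs G p. c q * Th q T)"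
proof -
  have bb: "b \<in> brauer_rel Y" and rb: "b \<in> rel_burnside G p" using b by (auto simp: rel_brauer_def)
  have "good (Suc (card (carrier G))) b"
    unfolding good_def
  proof (intro allI impI)
    fix T assume "b T \<noteq> 0"
    then obtain K \<sigma> where K: "subgroup K G" "\<sigma> \<in> homs K" "T = graph_sub K \<sigma>"
      using rb unfolding rel_burnside_def by blast
    have "card K \<le> card (carrier G)" using card_mono[OF finG subgroup.subset[OF K(1)]] .
    then have "card K < Suc (card (carrier G))" by simp
    then show "\<exists>K \<sigma>. subgroup K G \<and> \<sigma> \<in> homs K \<and> T = graph_sub K \<sigma> \<and>
       (cyclic_group (subgroup_generated G K) \<or> card K < Suc (card (carrier G)))"
      using K by blast
  qed
  from good_step[OF this] obtain k c where
    g0: "good 0 (\<lambda>T. int p ^ k * b T - (\<Sum>q\<in>theta_pairs G p. c q * Th q T))" by blast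
  define r where "r T = int p ^ k * b T - (\<Sum>q\<in>theta_pairs G p. c q * Th q T)" for T
  have g0': "good 0 r" using g0 by (simp add: r_def[abs_def])
  have cyc: "\<exists>K \<sigma>. subgroup K G \<and> cyclic_group (subgroup_generated G K) \<and> \<sigma> \<in> homs K \<and> T = graph_sub K \<sigma>"
    if "r T \<noteq> 0" for T
    using g0' that unfolding good_def by auto
  have rbur: "r \<in> burnside Y"
    unfolding burnside_def
  proof (intro CollectI allI impI)
    fix T assume "r T \<noteq> 0"
    then obtain K \<sigma> where "subgroup K G" "\<sigma> \<in> homs K" "T = graph_sub K \<sigma>" using cyc by blast
    then show "subgroup T Y" using graph_subgroup by simp
  qed
  have thchar: "(\<Sum>S\<in>{S. subgroup S Y}. Th q S * int (perm_char Y S x)) = 0"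
    if "q \<in> theta_pairs G p" "x \<in> carrier Y" for q x
    using Th_in[OF that(1)] that(2) by (auto simp: rel_brauer_def brauer_rel_def)
  have "r \<in> brauer_rel Y"
    unfolding brauer_rel_def
  proof (intro CollectI conjI rbur ballI)
    fix x assume x: "x \<in> carrier Y"
    have bz: "(\<Sum>S\<in>{S. subgroup S Y}. b S * int (perm_char Y S x)) = 0"
      using bb x by (auto simp: brauer_rel_def)
    have "(\<Sum>S\<in>{S. subgroup S Y}. r S * int (perm_char Y S x)) =
       int p ^ k * (\<Sum>S\<in>{S. subgroup S Y}. b S * int (perm_char Y S x))
       - (\<Sum>q\<in>theta_pairs G p. c q * (\<Sum>S\<in>{S. subgroup S Y}. Th q S * int (perm_char Y S x)))"
      unfolding r_def
      by (simp add: algebra_simps sum_subtractf sum_distrib_left sum_distrib_right sum.swap[of _ "{S. subgroup S Y}"])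
    also have "\<dots> = 0" using bz thchar x by simp
    finally show "(\<Sum>S\<in>{S. subgroup S Y}. r S * int (perm_char Y S x)) = 0" .
  qed
  then have "r T = 0" for T using cyclic_zero cyc by blast
  then show ?thesis unfolding r_def by (intro exI[of _ k] exI[of _ c]) simp
qed

end


context thm_setup
begin

lemma card_indep_bound:
  assumes finS: "finite S" and SM: "S \<subseteq> rel_brauer G p" and ind: "int_lin_indep_fam S (\<lambda>v. v)"
  shows "card S \<le> card (theta_pairs G p)"
proof -
  define \<phi> :: "(('a \<times> int) set \<Rightarrow> int) \<Rightarrow> (('a \<times> int) set \<Rightarrow> rat)" where
    "\<phi> v = (\<lambda>T. of_int (v T))" for v
  have injphi: "inj \<phi>"
  proof (rule injI)
    fix v w assume "\<phi> v = \<phi> w"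
    then have "of_int (v T) = (of_int (w T) :: rat)" for T by (metis \<phi>_def)
    then show "v = w" by (simp add: fun_eq_iff)
  qed
  define B where "B = \<phi> ` (Th ` theta_pairs G p)"
  have finB: "finite B" using fin_pairs by (simp add: B_def)
  have cardB: "card B \<le> card (theta_pairs G p)"
    unfolding B_def by (metis card_image_le fin_pairs finite_imageI image_image)
  have span: "\<phi> ` S \<subseteq> QV.span B"
  proof
    fix x assume "x \<in> \<phi> ` S"
    then obtain s where s: "s \<in> S" "x = \<phi> s" by blast
    have "s \<in> rel_brauer G p" using s SM by blast
    from spanning[OF this] obtain k c where kc: "\<forall>T. int p ^ k * s T = (\<Sum>q\<in>theta_pairs G p. c q * Th q T)"
      by blast
    have pk: "(of_int (int p ^ k) :: rat) \<noteq> 0" using p_gt1 by simp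
    have "\<phi> s = (\<Sum>q\<in>theta_pairs G p. qscale (of_int (c q) / of_int (int p ^ k)) (\<phi> (Th q)))"
    proof
      fix T
      have "(\<Sum>q\<in>theta_pairs G p. qscale (of_int (c q) / of_int (int p ^ k)) (\<phi> (Th q))) T
          = (\<Sum>q\<in>theta_pairs G p. of_int (c q) / of_int (int p ^ k) * of_int (Th q T))"
        by (simp add: sum_fun_apply qscale_def \<phi>_def)
      also have "\<dots> = of_int (\<Sum>q\<in>theta_pairs G p. c q * Th q T) / of_int (int p ^ k)"
        by (simp add: sum_divide_distrib)
      also have "\<dots> = of_int (int p ^ k * s T) / of_int (int p ^ k)" using kc by simp
      also have "\<dots> = of_int (s T)" using pk by simp
      finally show "\<phi> s T = (\<Sum>q\<in>theta_pairs G p. qscale (of_int (c q) / of_int (int p ^ k)) (\<phi> (Th q))) T"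
        by (simp add: \<phi>_def)
    qed
    also have "\<dots> \<in> QV.span B"
      by (rule QV.span_sum, rule QV.span_scale, rule QV.span_base) (auto simp: B_def)
    finally show "x \<in> QV.span B" using s by simp
  qed
  have indep: "QV.independent (\<phi> ` S)"
    unfolding QV.independent_explicit_finite_subsets
  proof (intro allI impI ballI)
    fix t u v
    assume t: "t \<subseteq> \<phi> ` S" and ft: "finite t" and sz: "(\<Sum>v\<in>t. qscale (u v) v) = 0" and v: "v \<in> t"
    obtain D :: int where D: "D > 0" "\<forall>v\<in>t. \<exists>z::int. of_int D * u v = of_int z"
      using common_denom[OF ft] by blast
    define zf where "zf v = (SOME z::int. of_int D * u v = of_int z)" for v
    have zf: "of_int D * u v = of_int (zf v)" if "v \<in> t" for v
      using someI_ex[OF bspec[OF D(2) that]] by (simp add: zf_def)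
    define e where "e w = (if \<phi> w \<in> t then zf (\<phi> w) else 0)" for w
    define S' where "S' = {w \<in> S. \<phi> w \<in> t}"
    have S't: "\<phi> ` S' = t" using t by (auto simp: S'_def)
    have injS': "inj_on \<phi> S'" using injphi by (simp add: inj_on_def inj_def)
    have "(\<Sum>w\<in>S. e w * w T) = 0" for T
    proof -
      have "(\<Sum>w\<in>S. e w * w T) = (\<Sum>w\<in>S. if \<phi> w \<in> t then zf (\<phi> w) * w T else 0)"
        by (rule sum.cong[OF refl]) (simp add: e_def)
      also have "\<dots> = (\<Sum>w\<in>S'. zf (\<phi> w) * w T)"
        unfolding S'_def by (rule sum.inter_filter[OF finS, symmetric])
      finally have "(\<Sum>w\<in>S. e w * w T) = (\<Sum>w\<in>S'. zf (\<phi> w) * w T)" .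
      then have "(of_int (\<Sum>w\<in>S. e w * w T) :: rat) = (\<Sum>w\<in>S'. of_int (zf (\<phi> w)) * \<phi> w T)"
        by (simp add: \<phi>_def)
      also have "\<dots> = (\<Sum>w\<in>S'. of_int D * (u (\<phi> w) * \<phi> w T))"
        by (rule sum.cong[OF refl]) (use zf S't in \<open>auto simp: mult.assoc\<close>)
      also have "\<dots> = of_int D * (\<Sum>v\<in>t. u v * v T)"
        using sum.reindex[OF injS', of "\<lambda>v. u v * v T"] S't by (simp add: sum_distrib_left)
      also have "(\<Sum>v\<in>t. u v * v T) = (\<Sum>v\<in>t. qscale (u v) v) T"
        by (simp add: sum_fun_apply qscale_def)
      also have "\<dots> = 0" using sz by simp
      finally have "(of_int (\<Sum>w\<in>S. e w * w T) :: rat) = 0" by simp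
      then show ?thesis by (simp only: of_int_eq_0_iff)
    qed
    then have e0: "\<forall>w\<in>S. e w = 0" using ind unfolding int_lin_indep_fam_def by blast
    obtain w where w: "w \<in> S" "v = \<phi> w" using v t by blast
    have "e w = 0" using e0 w(1) by blast
    then have "zf v = 0" using w(2) v by (simp add: e_def)
    then have "of_int D * u v = 0" using zf[OF v] by simp
    then show "u v = 0" using D(1) by simp
  qed
  have "card (\<phi> ` S) \<le> card B" using QV.independent_span_bound[OF finB indep span] by simp
  moreover have "card (\<phi> ` S) = card S" using card_image[of \<phi> S] injphi by (simp add: inj_on_def inj_def)
  ultimately show ?thesis using cardB by simp
qed

lemma inj_Th: "inj_on Th (theta_pairs G p)"
proof (rule inj_onI, rule ccontr)
  fix q1 q2 assume q: "q1 \<in> theta_pairs G p" "q2 \<in> theta_pairs G p" "Th q1 = Th q2" "q1 \<noteq> q2"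
  define c where "c q = (if q = q1 then 1 else if q = q2 then -1 else (0::int))" for q
  have "(\<Sum>q\<in>theta_pairs G p. c q * Th q T) = 0" for T
  proof -
    have "(\<Sum>q\<in>theta_pairs G p. c q * Th q T) =
        (\<Sum>q\<in>theta_pairs G p. (if q = q1 then Th q1 T else 0) - (if q = q2 then Th q2 T else 0))"
    proof (rule sum.cong[OF refl])
      fix q
      show "c q * Th q T = (if q = q1 then Th q1 T else 0) - (if q = q2 then Th q2 T else 0)"
        using q(4) by (cases "q = q1"; cases "q = q2") (simp_all add: c_def)
    qed
    also have "\<dots> = Th q1 T - Th q2 T" using fin_pairs q(1,2) by (simp add: sum_subtractf)
    finally show ?thesis using q(3) by simp
  qed
  then have "c q1 = 0" using theta_indep_Th q(1) unfolding int_lin_indep_fam_def by blast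
  then show False by (simp add: c_def)
qed

lemma S0_indep: "int_lin_indep_fam (Th ` theta_pairs G p) (\<lambda>v. v)"
  unfolding int_lin_indep_fam_def
proof (intro allI impI ballI)
  fix c v assume h: "\<forall>T. (\<Sum>v\<in>Th ` theta_pairs G p. c v * v T) = 0" and v: "v \<in> Th ` theta_pairs G p"
  have "(\<Sum>q\<in>theta_pairs G p. c (Th q) * Th q T) = 0" for T
  proof -
    have "(\<Sum>v\<in>Th ` theta_pairs G p. c v * v T) = (\<Sum>q\<in>theta_pairs G p. c (Th q) * Th q T)"
      by (simp add: sum.reindex[OF inj_Th])
    then show ?thesis using spec[OF h, of T] by simp
  qed
  then have "\<forall>T. (\<Sum>q\<in>theta_pairs G p. (\<lambda>q. c (Th q)) q * Th q T) = 0" by simp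
  then have all: "\<forall>q\<in>theta_pairs G p. c (Th q) = 0"
    using theta_indep_Th unfolding int_lin_indep_fam_def by (rule_tac mp[OF spec[of _ "\<lambda>q. c (Th q)"]]) auto
  obtain q where "q \<in> theta_pairs G p" "v = Th q" using v by blast
  then show "c v = 0" using all by simp
qed

lemma zrank_eq: "zrank (rel_brauer G p) = card (theta_pairs G p)"
proof -
  define W where "W = {card S | S. finite S \<and> S \<subseteq> rel_brauer G p \<and> int_lin_indep_fam S (\<lambda>v. v)}"
  have le: "\<forall>w\<in>W. w \<le> card (theta_pairs G p)" using card_indep_bound by (auto simp: W_def)
  have "card (Th ` theta_pairs G p) = card (theta_pairs G p)" using card_image[OF inj_Th] .
  moreover have "Th ` theta_pairs G p \<subseteq> rel_brauer G p" using Th_in by blast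
  ultimately have inW: "card (theta_pairs G p) \<in> W"
    unfolding W_def using fin_pairs S0_indep by (metis (mono_tags, lifting) finite_imageI mem_Collect_eq)
  have finW: "finite W" using le finite_subset[of W "{..card (theta_pairs G p)}"] by auto
  have "Max W = card (theta_pairs G p)" using Max_eqI[OF finW] le inW by blast
  then show ?thesis by (simp add: zrank_def W_def)
qed

end


theorem theorem5p5:
  fixes G :: "('a, 'b) monoid_scheme" and p :: nat and L :: "'a set \<Rightarrow> 'a set"
  assumes "Factorial_Ring.prime p"
    and "comm_group G"
    and "p_group G p"
    and L: "\<And>G'. subgroup G' G \<Longrightarrow> \<not> cyclic_group (subgroup_generated G G') \<Longrightarrow>
              subgroup (L G') G \<and> L G' \<subset> G' \<and>
              (subgroup_generated G G') Mod (L G') \<cong> (Cp p \<times>\<times> Cp p)"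
  shows "(\<forall>(G', \<rho>) \<in> theta_pairs G p. Theta G p L G' \<rho> \<in> rel_brauer G p)
       \<and> int_lin_indep_fam (theta_pairs G p) (\<lambda>(G', \<rho>). Theta G p L G' \<rho>)
       \<and> (\<forall>b \<in> rel_brauer G p. \<exists>(k::nat) c. \<forall>T.
            int p ^ k * b T = (\<Sum>(G', \<rho>) \<in> theta_pairs G p. c (G', \<rho>) * Theta G p L G' \<rho> T))
       \<and> zrank (rel_brauer G p) = card (theta_pairs G p)"
proof -
  interpret thm_setup G p L
    using assms by (intro thm_setup.intro thm_setup_axioms.intro) auto
  have 1: "\<forall>(G', \<rho>) \<in> theta_pairs G p. Theta G p L G' \<rho> \<in> rel_brauer G p"
    using theta_in_rel_brauer by auto
  have 3: "\<forall>b \<in> rel_brauer G p. \<exists>(k::nat) c. \<forall>T.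
            int p ^ k * b T = (\<Sum>(G', \<rho>) \<in> theta_pairs G p. c (G', \<rho>) * Theta G p L G' \<rho> T)"
  proof
    fix b assume "b \<in> rel_brauer G p"
    from spanning[OF this] obtain k c where
      kc: "\<forall>T. int p ^ k * b T = (\<Sum>q\<in>theta_pairs G p. c q * Th q T)" by blast
    have "\<forall>T. int p ^ k * b T = (\<Sum>(G', \<rho>) \<in> theta_pairs G p. c (G', \<rho>) * Theta G p L G' \<rho> T)"
      using kc sum_conv by simp
    then show "\<exists>(k::nat) c. \<forall>T.
            int p ^ k * b T = (\<Sum>(G', \<rho>) \<in> theta_pairs G p. c (G', \<rho>) * Theta G p L G' \<rho> T)"
      by blast
  qed
  show ?thesis using 1 theta_indep 3 zrank_eq by blast
qed

end
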